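(* Every most compact MP-tree on $S$ can be obtained from some cubic tree $T_0$ on $S$ with $\mathrm{MP}(T_0)=\min\{\mathrm{MP}(T'): T'\text{ a cubic tree on } S\}$ by a finite sequence of edge contractions $T_0\to T_1\to\cdots\to T_k$, where each step contracts an edge $\{u,v\}$ of the current tree $T_{j}$ having at most one labelled endpoint and min-cost $\mathrm{md}(u,v)=0$ in $T_j$. Conversely, every tree obtained from such a $T_0$ by such a sequence of contractions is an MP-tree on $S$.
   Context: Fix integers $n\ge 2$ and $m\ge 1$, and finite nonempty sets $\Sigma_1,\dots,\Sigma_m$ (the states of characters $1,\dots,m$). A set of species $S=\{S_1,\dots,S_n\}$ is given, each species $S_j$ being an $m$-tuple $(s_{j,1},\dots,s_{j,m})\in\Sigma_1\times\cdots\times\Sigma_m$. A tree on $S$ is a finite unrooted tree (connected acyclic undirected graph) $T$ together with an injective map assigning each species $S_j$ to a node of $T$. Nodes receiving a species are called labelled, the others unlabelled. A cubic tree on $S$ is a tree on $S$ whose labelled nodes are exactly its leaves and in which every non-leaf node has degree exactly $3$. A fit of $T$ is a map $f$ assigning to every node $v$ a tuple $f(v)=(f(v)_1,\dots,f(v)_m)\in\Sigma_1\times\cdots\times\Sigma_m$ such that $f(v)=S_j$ whenever $v$ is labelled with $S_j$. The cost of $f$ is $\sum_{\{u,v\}\in E(T)} h(f(u),f(v))$, where $h$ is the Hamming distance. The MP-cost $\mathrm{MP}(T)$ is the minimum cost over all fits of $T$. A best fit is a fit of cost $\mathrm{MP}(T)$. An MP-tree on $S$ is a tree on $S$ whose MP-cost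 equals the minimum of $\mathrm{MP}(T)$ over all trees $T$ on $S$. A most compact MP-tree on $S$ is an MP-tree on $S$ having the minimum number of nodes among all MP-trees on $S$. Root sets: for a node $v$ of a tree $T$ and character $i$, $VV(v)_i=\{f(v)_i : f \text{ a best fit of } T\}\subseteq\Sigma_i$. For adjacent nodes $u,v$, the min-cost is $\mathrm{md}(u,v)=|\{i: VV(u)_i\cap VV(v)_i=\emptyset\}|$. Edge contraction: for an edge $\{u,v\}$ of $T$ with at most one of $u,v$ labelled, $T/\{u,v\}$ is obtained by replacing $u$ and $v$ by a single new node $w$ adjacent to every node that was adjacent to $u$ or to $v$ (other than $u,v$ themselves); $w$ carries the species of $u$ or $v$ if one of them is labelled, and is unlabelled otherwise. All other nodes, edges and labels are unchanged. *)

theory Defs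
  imports Main
begin

text \<open>Characters are indexed by i < m, species by j < n.
  States of all characters live in one type 'a; character i has state set Sig i.
  A tuple is a function nat => 'a, only its values at i < m matter.
  Species j is the tuple S j.
  A tree on S is a triple (V, E, lab): node set V, edge set E (2-element sets),
  lab j = node carrying species j (j < n).\<close>

type_synonym 'a tuple = "nat \<Rightarrow> 'a"
type_synonym ptree = "nat set \<times> nat set set \<times> (nat \<Rightarrow> nat)"

definition nodes :: "ptree \<Rightarrow> nat set" where "nodes T = fst T"
definition edges :: "ptree \<Rightarrow> nat set set" where "edges T = fst (snd T)"
definition lab :: "ptree \<Rightarrow> nat \<Rightarrow> nat" where "lab T = snd (snd T)"

definition labelled :: "nat \<Rightarrow> ptree \<Rightarrow> nat set" where
  "labelled n T = lab T ` {..<n}"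

definition adjacent :: "ptree \<Rightarrow> nat \<Rightarrow> nat \<Rightarrow> bool" where
  "adjacent T x y \<longleftrightarrow> {x, y} \<in> edges T"

definition is_cycle :: "ptree \<Rightarrow> nat list \<Rightarrow> bool" where
  "is_cycle T cs \<longleftrightarrow> length cs \<ge> 3 \<and> distinct cs \<and> set cs \<subseteq> nodes T \<and>
     (\<forall>k < length cs. adjacent T (cs ! k) (cs ! ((k + 1) mod length cs)))"

definition connected_graph :: "ptree \<Rightarrow> bool" where
  "connected_graph T \<longleftrightarrow> (\<forall>x\<in>nodes T. \<forall>y\<in>nodes T. (adjacent T)\<^sup>*\<^sup>* x y)"

definition acyclic_graph :: "ptree \<Rightarrow> bool" where
  "acyclic_graph T \<longleftrightarrow> \<not> (\<exists>cs. is_cycle T cs)"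

definition tree_on :: "nat \<Rightarrow> ptree \<Rightarrow> bool" where
  "tree_on n T \<longleftrightarrow> finite (nodes T) \<and> nodes T \<noteq> {} \<and>
     (\<forall>e\<in>edges T. \<exists>x y. e = {x, y} \<and> x \<noteq> y \<and> x \<in> nodes T \<and> y \<in> nodes T) \<and>
     connected_graph T \<and> acyclic_graph T \<and>
     inj_on (lab T) {..<n} \<and> lab T ` {..<n} \<subseteq> nodes T"

definition degree :: "ptree \<Rightarrow> nat \<Rightarrow> nat" where
  "degree T v = card {e \<in> edges T. v \<in> e}"

definition cubic_tree_on :: "nat \<Rightarrow> ptree \<Rightarrow> bool" where
  "cubic_tree_on n T \<longleftrightarrow> tree_on n T \<and>
     (\<forall>v\<in>nodes T. (v \<in> labelled n T \<longleftrightarrow> degree T v = 1) \<and>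
                   (degree T v \<noteq> 1 \<longrightarrow> degree T v = 3))"

definition hamming :: "nat \<Rightarrow> 'a tuple \<Rightarrow> 'a tuple \<Rightarrow> nat" where
  "hamming m x y = card {i. i < m \<and> x i \<noteq> y i}"

definition is_fit :: "nat \<Rightarrow> (nat \<Rightarrow> 'a set) \<Rightarrow> nat \<Rightarrow> (nat \<Rightarrow> 'a tuple) \<Rightarrow> ptree
    \<Rightarrow> (nat \<Rightarrow> 'a tuple) \<Rightarrow> bool" where
  "is_fit m Sig n S T f \<longleftrightarrow> (\<forall>v\<in>nodes T. \<forall>i<m. f v i \<in> Sig i) \<and>
     (\<forall>j<n. \<forall>i<m. f (lab T j) i = S j i)"

definition edge_cost :: "nat \<Rightarrow> (nat \<Rightarrow> 'a tuple) \<Rightarrow> nat set \<Rightarrow> nat" where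
  "edge_cost m f e = (THE c. \<exists>x y. e = {x, y} \<and> c = hamming m (f x) (f y))"

definition fit_cost :: "nat \<Rightarrow> ptree \<Rightarrow> (nat \<Rightarrow> 'a tuple) \<Rightarrow> nat" where
  "fit_cost m T f = (\<Sum>e\<in>edges T. edge_cost m f e)"

definition MP :: "nat \<Rightarrow> (nat \<Rightarrow> 'a set) \<Rightarrow> nat \<Rightarrow> (nat \<Rightarrow> 'a tuple) \<Rightarrow> ptree \<Rightarrow> nat" where
  "MP m Sig n S T = (LEAST c. \<exists>f. is_fit m Sig n S T f \<and> c = fit_cost m T f)"

definition best_fit :: "nat \<Rightarrow> (nat \<Rightarrow> 'a set) \<Rightarrow> nat \<Rightarrow> (nat \<Rightarrow> 'a tuple) \<Rightarrow> ptree
    \<Rightarrow> (nat \<Rightarrow> 'a tuple) \<Rightarrow> bool" where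
  "best_fit m Sig n S T f \<longleftrightarrow> is_fit m Sig n S T f \<and> fit_cost m T f = MP m Sig n S T"

definition VV :: "nat \<Rightarrow> (nat \<Rightarrow> 'a set) \<Rightarrow> nat \<Rightarrow> (nat \<Rightarrow> 'a tuple) \<Rightarrow> ptree
    \<Rightarrow> nat \<Rightarrow> nat \<Rightarrow> 'a set" where
  "VV m Sig n S T v i = {f v i | f. best_fit m Sig n S T f}"

definition md :: "nat \<Rightarrow> (nat \<Rightarrow> 'a set) \<Rightarrow> nat \<Rightarrow> (nat \<Rightarrow> 'a tuple) \<Rightarrow> ptree
    \<Rightarrow> nat \<Rightarrow> nat \<Rightarrow> nat" where
  "md m Sig n S T u v = card {i. i < m \<and> VV m Sig n S T u i \<inter> VV m Sig n S T v i = {}}"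

definition MP_tree :: "nat \<Rightarrow> (nat \<Rightarrow> 'a set) \<Rightarrow> nat \<Rightarrow> (nat \<Rightarrow> 'a tuple) \<Rightarrow> ptree \<Rightarrow> bool" where
  "MP_tree m Sig n S T \<longleftrightarrow> tree_on n T \<and>
     (\<forall>T'. tree_on n T' \<longrightarrow> MP m Sig n S T \<le> MP m Sig n S T')"

definition most_compact_MP_tree :: "nat \<Rightarrow> (nat \<Rightarrow> 'a set) \<Rightarrow> nat \<Rightarrow> (nat \<Rightarrow> 'a tuple)
    \<Rightarrow> ptree \<Rightarrow> bool" where
  "most_compact_MP_tree m Sig n S T \<longleftrightarrow> MP_tree m Sig n S T \<and>
     (\<forall>T'. MP_tree m Sig n S T' \<longrightarrow> card (nodes T) \<le> card (nodes T'))"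

text \<open>Contraction T/{u,v}; the new node w is any node not among the remaining
  old nodes (it may reuse the name u or v).\<close>
definition contract :: "ptree \<Rightarrow> nat \<Rightarrow> nat \<Rightarrow> nat \<Rightarrow> ptree" where
  "contract T u v w =
     ((nodes T - {u, v}) \<union> {w},
      {e \<in> edges T. e \<inter> {u, v} = {}} \<union>
        {{w, x} | x. x \<notin> {u, v} \<and> ({u, x} \<in> edges T \<or> {v, x} \<in> edges T)},
      (\<lambda>j. if lab T j \<in> {u, v} then w else lab T j))"

definition md0_contraction_step :: "nat \<Rightarrow> (nat \<Rightarrow> 'a set) \<Rightarrow> nat \<Rightarrow> (nat \<Rightarrow> 'a tuple)
    \<Rightarrow> ptree \<Rightarrow> ptree \<Rightarrow> bool" where
  "md0_contraction_step m Sig n S T T' \<longleftrightarrow>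
     (\<exists>u v w. u \<noteq> v \<and> {u, v} \<in> edges T \<and>
        \<not> (u \<in> labelled n T \<and> v \<in> labelled n T) \<and>
        md m Sig n S T u v = 0 \<and> w \<notin> nodes T - {u, v} \<and>
        T' = contract T u v w)"

definition tree_iso :: "nat \<Rightarrow> ptree \<Rightarrow> ptree \<Rightarrow> bool" where
  "tree_iso n T T' \<longleftrightarrow> (\<exists>\<phi>. bij_betw \<phi> (nodes T) (nodes T') \<and>
     (\<forall>x\<in>nodes T. \<forall>y\<in>nodes T. {x, y} \<in> edges T \<longleftrightarrow> {\<phi> x, \<phi> y} \<in> edges T') \<and>
     (\<forall>j<n. \<phi> (lab T j) = lab T' j))"

end

theory Submission
  imports Defs
begin

definition wfg :: "ptree \<Rightarrow> bool" where
 "wfg T \<longleftrightarrow> (\<forall>e\<in>edges T. \<exists>x y. e = {x,y} \<and> x\<noteq>y \<and> x\<in>nodes T \<and> y\<in>nodes T)"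

definition adjm :: "ptree \<Rightarrow> nat set \<Rightarrow> nat \<Rightarrow> nat \<Rightarrow> bool" where
 "adjm T e x y \<longleftrightarrow> {x,y} \<in> edges T \<and> {x,y} \<noteq> e"

definition bridges :: "ptree \<Rightarrow> bool" where
 "bridges T \<longleftrightarrow> (\<forall>a b. {a,b} \<in> edges T \<longrightarrow> a \<noteq> b \<longrightarrow> \<not> (adjm T {a,b})\<^sup>*\<^sup>* a b)"

lemma rtranclp_inv: assumes "R\<^sup>*\<^sup>* a b" "\<And>x y. R x y \<Longrightarrow> P x \<Longrightarrow> P y" "P a" shows "P b"
  using assms(1,3) by (induction rule: rtranclp_induct) (auto intro: assms(2))

lemma rtranclp_map: assumes "R\<^sup>*\<^sup>* a b" "\<And>x y. R x y \<Longrightarrow> Q\<^sup>*\<^sup>* (g x) (g y)"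
  shows "Q\<^sup>*\<^sup>* (g a) (g b)"
  using assms(1) by (induction rule: rtranclp_induct) (auto intro: rtranclp_trans assms(2))

lemma rtranclp_sym: assumes "R\<^sup>*\<^sup>* a b" "\<And>x y. R x y \<Longrightarrow> R y x" shows "R\<^sup>*\<^sup>* b a"
  using assms(1) by (induction rule: rtranclp_induct)
    (auto intro: converse_rtranclp_into_rtranclp assms(2))

lemma wfg_edge: assumes "wfg T" "{x,y} \<in> edges T"
  shows "x \<in> nodes T" "y \<in> nodes T" "x \<noteq> y"
  using assms unfolding wfg_def by (auto simp: doubleton_eq_iff)

lemma cycle_not_bridges:
  assumes "is_cycle T cs" shows "\<not> bridges T"
proof
  assume br: "bridges T"
  let ?L = "length cs"
  from assms have L: "?L \<ge> 3" and d: "distinct cs"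
    and adj: "\<And>k. k < ?L \<Longrightarrow> {cs!k, cs!((k+1) mod ?L)} \<in> edges T"
    unfolding is_cycle_def adjacent_def by auto
  have dd: "\<And>i j. i < ?L \<Longrightarrow> j < ?L \<Longrightarrow> cs!i = cs!j \<longleftrightarrow> i = j"
    using d by (simp add: nth_eq_iff_index_eq)
  define e where "e = {cs!0, cs!1}"
  have L0: "0 < ?L" "(0+1) mod ?L = 1" using L by auto
  have e_in: "e \<in> edges T" using adj[OF L0(1)] L0(2) by (simp add: e_def)
  have ne: "cs!0 \<noteq> cs!1" using dd[of 0 1] L0(1) L by simp
  have walk: "(adjm T e)\<^sup>*\<^sup>* (cs!1) (cs!k)" if "1 \<le> k" "k < ?L" for k
    using that
  proof (induction k)
    case 0 then show ?case by simp
  next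
    case (Suc k)
    show ?case
    proof (cases "k = 0")
      case True then show ?thesis by simp
    next
      case False
      then have IH: "(adjm T e)\<^sup>*\<^sup>* (cs!1) (cs!k)" using Suc by auto
      have "{cs!k, cs!(Suc k)} \<in> edges T" using adj[of k] Suc by simp
      moreover have "{cs!k, cs!(Suc k)} \<noteq> e"
      proof
        assume "{cs!k, cs!(Suc k)} = e"
        then have "cs!(Suc k) = cs!0 \<or> cs!(Suc k) = cs!1" by (auto simp: e_def)
        then show False using dd[of "Suc k" 0] dd[of "Suc k" 1] Suc.prems False L0(1) L by force
      qed
      ultimately have "adjm T e (cs!k) (cs!(Suc k))" by (simp add: adjm_def)
      with IH show ?thesis by (rule rtranclp.rtrancl_into_rtrancl)
    qed
  qed
  have lst: "adjm T e (cs!(?L-1)) (cs!0)"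
  proof -
    have "(?L - 1) + 1 = ?L" using L by linarith
    then have "((?L - 1) + 1) mod ?L = 0" by simp
    then have "{cs!(?L-1), cs!0} \<in> edges T" using adj[of "?L-1"] L by simp
    moreover have "{cs!(?L-1), cs!0} \<noteq> e"
    proof
      assume "{cs!(?L-1), cs!0} = e"
      then have "cs!(?L-1) = cs!0 \<or> cs!(?L-1) = cs!1" by (auto simp: e_def)
      then show False using dd[of "?L-1" 0] dd[of "?L-1" 1] L0(1) L by force
    qed
    ultimately show ?thesis by (simp add: adjm_def)
  qed
  have "1 \<le> ?L - 1" "?L - 1 < ?L" using L by auto
  then have "(adjm T e)\<^sup>*\<^sup>* (cs!1) (cs!(?L-1))" by (rule walk)
  then have "(adjm T e)\<^sup>*\<^sup>* (cs!1) (cs!0)" using lst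
    by (rule rtranclp.rtrancl_into_rtrancl)
  then have "(adjm T {cs!1, cs!0})\<^sup>*\<^sup>* (cs!1) (cs!0)" by (simp add: e_def insert_commute)
  moreover have "{cs!1, cs!0} \<in> edges T" using e_in by (simp add: e_def insert_commute)
  ultimately show False using br ne unfolding bridges_def by metis
qed

lemma bridges_acyclic: "bridges T \<Longrightarrow> acyclic_graph T"
  using cycle_not_bridges unfolding acyclic_graph_def by blast

lemma rtranclp_list: assumes "R\<^sup>*\<^sup>* a b"
  shows "\<exists>ps. ps \<noteq> [] \<and> hd ps = a \<and> last ps = b \<and> successively R ps"
  using assms
proof (induction rule: rtranclp_induct)
  case base then show ?case by (intro exI[of _ "[a]"]) simp
next
  case (step y z)
  then obtain ps where "ps \<noteq> []" "hd ps = a" "last ps = y" "successively R ps" by blast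
  then show ?case using step by (intro exI[of _ "ps @ [z]"]) (auto simp: successively_append_iff)
qed

lemma distinct_walk: assumes "ps \<noteq> []" "successively R ps"
  shows "\<exists>qs. qs \<noteq> [] \<and> hd qs = hd ps \<and> last qs = last ps \<and> successively R qs \<and> distinct qs"
  using assms
proof (induction "length ps" arbitrary: ps rule: less_induct)
  case less
  show ?case
  proof (cases "distinct ps")
    case True then show ?thesis using less.prems by blast
  next
    case False
    then obtain xs ys zs y where ps: "ps = xs @ [y] @ ys @ [y] @ zs"
      using not_distinct_decomp by blast
    let ?qs = "xs @ [y] @ zs"
    have s1: "successively R (xs @ [y])"
      using less.prems(2) unfolding ps
      by (metis append.assoc successively_append_iff)
    have s2: "successively R ([y] @ zs)"
      using less.prems(2) unfolding ps
      by (metis append.assoc successively_append_iff)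
    have sq: "successively R ?qs"
      using s1 s2 by (cases zs) (auto simp: successively_append_iff)
    have h: "hd ?qs = hd ps" unfolding ps by (cases xs) auto
    have l: "last ?qs = last ps" unfolding ps by (cases zs) auto
    have "length ?qs < length ps" unfolding ps by simp
    then show ?thesis using less.hyps[of ?qs] sq h l by fastforce
  qed
qed

lemma acyclic_bridges: assumes "wfg T" "acyclic_graph T" shows "bridges T"
  unfolding bridges_def
proof (intro allI impI notI)
  fix a b assume e: "{a,b} \<in> edges T" "a\<noteq>b" "(adjm T {a,b})\<^sup>*\<^sup>* a b"
  obtain ps where "ps\<noteq>[]" "hd ps = a" "last ps = b" "successively (adjm T {a,b}) ps"
    using rtranclp_list[OF e(3)] by blast
  then obtain qs where qs: "qs\<noteq>[]" "hd qs = a" "last qs = b"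
    "successively (adjm T {a,b}) qs" "distinct qs"
    using distinct_walk by metis
  let ?L = "length qs"
  have q0: "qs!0 = a" using qs by (simp add: hd_conv_nth)
  have ql: "qs!(?L-1) = b" using qs by (simp add: last_conv_nth)
  have L1: "?L \<noteq> 1" using q0 ql e(2) by auto
  have L2: "?L \<noteq> 2"
  proof
    assume L: "?L = 2"
    then have "adjm T {a,b} (qs!0) (qs!1)" using successively_nth[OF qs(4), of 0] by simp
    then show False using q0 ql L by (simp add: adjm_def)
  qed
  have "?L \<noteq> 0" using qs(1) by simp
  then have L: "?L \<ge> 3" using L1 L2 by arith
  have adj: "adjacent T (qs!k) (qs!((k+1) mod ?L))" if "k < ?L" for k
  proof (cases "Suc k < ?L")
    case True
    then show ?thesis using successively_nth[OF qs(4), of k]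
      by (simp add: adjm_def adjacent_def)
  next
    case False
    then have k: "k = ?L - 1" using that by auto
    then have "k + 1 = ?L" using that by linarith
    then have "(k+1) mod ?L = 0" by simp
    then show ?thesis using q0 ql e(1) k by (simp add: adjacent_def insert_commute)
  qed
  have "set qs \<subseteq> nodes T"
  proof
    fix x assume "x \<in> set qs"
    then obtain k where "k < ?L" "x = qs!k" by (metis in_set_conv_nth)
    then show "x \<in> nodes T" using adj[of k] wfg_edge[OF assms(1)] by (auto simp: adjacent_def)
  qed
  then have "is_cycle T qs" using L qs(5) adj unfolding is_cycle_def by auto
  then show False using assms(2) unfolding acyclic_graph_def by blast
qed

lemma tree_on_wfg: "tree_on n T \<Longrightarrow> wfg T"
  unfolding tree_on_def wfg_def by blast

lemma tree_on_bridges: "tree_on n T \<Longrightarrow> bridges T"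
  using acyclic_bridges tree_on_wfg unfolding tree_on_def by blast

lemma tree_onI:
  assumes "finite (nodes T)" "nodes T \<noteq> {}" "wfg T" "connected_graph T" "bridges T"
    "inj_on (lab T) {..<n}" "lab T ` {..<n} \<subseteq> nodes T"
  shows "tree_on n T"
  using assms bridges_acyclic unfolding tree_on_def wfg_def by blast

lemma finite_edges: assumes "wfg T" "finite (nodes T)" shows "finite (edges T)"
proof -
  have "edges T \<subseteq> Pow (nodes T)" using assms(1) unfolding wfg_def by auto
  then show ?thesis using assms(2) finite_subset by blast
qed


lemma contract_parts:
  "nodes (contract T u v w) = (nodes T - {u,v}) \<union> {w}"
  "edges (contract T u v w) = {e \<in> edges T. e \<inter> {u,v} = {}} \<union>
     {{w,x} | x. x \<notin> {u,v} \<and> ({u,x} \<in> edges T \<or> {v,x} \<in> edges T)}"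
  "lab (contract T u v w) = (\<lambda>j. if lab T j \<in> {u,v} then w else lab T j)"
  by (simp_all add: contract_def nodes_def edges_def lab_def)

lemma walk_iff_inv: assumes "R\<^sup>*\<^sup>* a b" "\<And>s t. R s t \<Longrightarrow> P s = P t" shows "P a = P b"
  using assms(1) by (induction rule: rtranclp_induct) (auto dest: assms(2))

lemma adjm_sym: "adjm T e x y \<Longrightarrow> adjm T e y x"
  by (simp add: adjm_def insert_commute)

lemma reach_step_iff: assumes "adjm T e x y"
  shows "(adjm T e)\<^sup>*\<^sup>* a x \<longleftrightarrow> (adjm T e)\<^sup>*\<^sup>* a y"
  using assms adjm_sym[OF assms] by (meson rtranclp.rtrancl_into_rtrancl)

lemma bridgesD: "bridges T \<Longrightarrow> {a,b} \<in> edges T \<Longrightarrow> a \<noteq> b \<Longrightarrow> \<not> (adjm T {a,b})\<^sup>*\<^sup>* a b"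
  unfolding bridges_def by blast

lemma adjacent_sym: "adjacent T x y \<Longrightarrow> adjacent T y x"
  by (simp add: adjacent_def insert_commute)

locale contr =
  fixes n :: nat and T :: ptree and u v w :: nat
  assumes tree: "tree_on n T" and uv: "{u,v} \<in> edges T" and une: "u \<noteq> v"
    and notboth: "\<not> (u \<in> labelled n T \<and> v \<in> labelled n T)"
    and wfresh: "w \<notin> nodes T - {u,v}"
begin

abbreviation "T' \<equiv> contract T u v w"

lemma wf: "wfg T" using tree tree_on_wfg by blast
lemma br: "bridges T" using tree tree_on_bridges by blast
lemma uV: "u \<in> nodes T" and vV: "v \<in> nodes T" using wfg_edge[OF wf uv] by auto

lemma edgeE: assumes "{s,t} \<in> edges T'"
  obtains (A) "{s,t} \<in> edges T" "s \<notin> {u,v}" "t \<notin> {u,v}" "s \<noteq> w" "t \<noteq> w"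
  | (B) x c where "{s,t} = {w,x}" "x \<notin> {u,v}" "c \<in> {u,v}" "{c,x} \<in> edges T" "x \<noteq> w" "x \<in> nodes T"
proof -
  consider "{s,t} \<in> edges T" "{s,t} \<inter> {u,v} = {}"
    | x where "{s,t} = {w,x}" "x \<notin> {u,v}" "{u,x} \<in> edges T \<or> {v,x} \<in> edges T"
    using assms unfolding contract_parts by blast
  then show ?thesis
  proof cases
    case 1
    then have "s \<in> nodes T" "t \<in> nodes T" using wfg_edge[OF wf] by auto
    then show ?thesis using 1 wfresh that(1) by auto
  next
    case 2
    then obtain c where c: "c \<in> {u,v}" "{c,x} \<in> edges T" by blast
    then have "x \<in> nodes T" using wfg_edge[OF wf] by auto
    then show ?thesis using 2 c wfresh that(2)[of x c] by auto
  qed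
qed

lemma wf': "wfg T'"
  unfolding wfg_def
proof
  fix e assume "e \<in> edges T'"
  then consider "e \<in> edges T" "e \<inter> {u,v} = {}"
    | x where "e = {w,x}" "x \<notin> {u,v}" "{u,x} \<in> edges T \<or> {v,x} \<in> edges T"
    unfolding contract_parts by blast
  then show "\<exists>x y. e = {x, y} \<and> x \<noteq> y \<and> x \<in> nodes T' \<and> y \<in> nodes T'"
  proof cases
    case 1
    then obtain a b where ab: "e = {a,b}" "a \<noteq> b" "a \<in> nodes T" "b \<in> nodes T"
      using wf unfolding wfg_def by blast
    then have "a \<in> nodes T'" "b \<in> nodes T'" using 1 unfolding contract_parts by auto
    then show ?thesis using ab by blast
  next
    case 2
    then have "x \<in> nodes T" using wfg_edge[OF wf] by auto
    then have "w \<in> nodes T'" "x \<in> nodes T'" "w \<noteq> x" using 2 wfresh unfolding contract_parts by auto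
    then show ?thesis using 2 by blast
  qed
qed

definition pi :: "nat \<Rightarrow> nat" where "pi t = (if t \<in> {u,v} then w else t)"

lemma conn': "connected_graph T'"
  unfolding connected_graph_def
proof (intro ballI)
  fix a b assume a: "a \<in> nodes T'" and b: "b \<in> nodes T'"
  define a' where "a' = (if a = w then u else a)"
  define b' where "b' = (if b = w then u else b)"
  have a': "a' \<in> nodes T" "pi a' = a" using a uV unfolding a'_def pi_def contract_parts by auto
  have b': "b' \<in> nodes T" "pi b' = b" using b uV unfolding b'_def pi_def contract_parts by auto
  have "(adjacent T)\<^sup>*\<^sup>* a' b'" using tree a' b' unfolding tree_on_def connected_graph_def by blast
  then have "(adjacent T')\<^sup>*\<^sup>* (pi a') (pi b')"
  proof (rule rtranclp_map)
    fix s t assume st: "adjacent T s t"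
    then have e: "{s,t} \<in> edges T" by (simp add: adjacent_def)
    show "(adjacent T')\<^sup>*\<^sup>* (pi s) (pi t)"
    proof (cases "s \<in> {u,v}"; cases "t \<in> {u,v}")
      assume "s \<in> {u,v}" "t \<in> {u,v}" then show ?thesis by (simp add: pi_def)
    next
      assume "s \<in> {u,v}" "t \<notin> {u,v}"
      then have "{w,t} \<in> edges T'" using e unfolding contract_parts by auto
      then show ?thesis using \<open>s \<in> {u,v}\<close> \<open>t \<notin> {u,v}\<close>
        by (auto simp: pi_def adjacent_def)
    next
      assume "s \<notin> {u,v}" "t \<in> {u,v}"
      then have "{w,s} \<in> edges T'" using e unfolding contract_parts by (auto simp: insert_commute)
      then show ?thesis using \<open>s \<notin> {u,v}\<close> \<open>t \<in> {u,v}\<close>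
        by (auto simp: pi_def adjacent_def insert_commute)
    next
      assume "s \<notin> {u,v}" "t \<notin> {u,v}"
      then have "{s,t} \<in> edges T'" using e unfolding contract_parts by auto
      then show ?thesis using \<open>s \<notin> {u,v}\<close> \<open>t \<notin> {u,v}\<close>
        by (auto simp: pi_def adjacent_def)
    qed
  qed
  then show "(adjacent T')\<^sup>*\<^sup>* a b" using a' b' by simp
qed

lemma br': "bridges T'"
  unfolding bridges_def
proof (intro allI impI notI)
  fix a b assume ab: "{a,b} \<in> edges T'" "a \<noteq> b" and walk: "(adjm T' {a,b})\<^sup>*\<^sup>* a b"
  have Puv: "(adjm T e)\<^sup>*\<^sup>* p u \<longleftrightarrow> (adjm T e)\<^sup>*\<^sup>* p v" if "{u,v} \<noteq> e" for p e
  proof -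
    have "adjm T e u v" using uv that by (simp add: adjm_def)
    then show ?thesis by (rule reach_step_iff)
  qed
  have Pc: "(adjm T e)\<^sup>*\<^sup>* p c \<longleftrightarrow> (adjm T e)\<^sup>*\<^sup>* p u" if "{u,v} \<noteq> e" "c \<in> {u,v}" for p e c
  proof -
    from that(2) have "c = u \<or> c = v" by blast
    then show ?thesis using Puv[OF that(1), of p] by blast
  qed
  have notin: "{c,x} \<noteq> {a',b'}" if "c \<notin> {a',b'}" for c x a' b' :: nat
    using that by blast
  from ab(1) show False
  proof (cases rule: edgeE)
    case A
    define P where "P t = (adjm T {a,b})\<^sup>*\<^sup>* a (if t = w then u else t)" for t
    have Pw: "P w = (adjm T {a,b})\<^sup>*\<^sup>* a u" by (simp add: P_def)
    have Pn: "P t = (adjm T {a,b})\<^sup>*\<^sup>* a t" if "t \<noteq> w" for t using that by (simp add: P_def)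
    have ne: "{u,v} \<noteq> {a,b}" using A(2,3) by (intro notin) blast
    have "P a = P b"
    proof (rule walk_iff_inv[OF walk])
      fix s t assume st: "adjm T' {a,b} s t"
      then have est: "{s,t} \<in> edges T'" "{s,t} \<noteq> {a,b}" unfolding adjm_def by blast+
      from est(1) show "P s = P t"
      proof (cases rule: edgeE)
        case A
        then have "adjm T {a,b} s t" using est(2) unfolding adjm_def by blast
        then have "(adjm T {a,b})\<^sup>*\<^sup>* a s \<longleftrightarrow> (adjm T {a,b})\<^sup>*\<^sup>* a t" by (rule reach_step_iff)
        then show ?thesis using Pn A(4,5) by simp
      next
        case (B x c)
        have "c \<notin> {a,b}" using B(3) \<open>a \<notin> {u,v}\<close> \<open>b \<notin> {u,v}\<close> by blast
        then have "{c,x} \<noteq> {a,b}" by (rule notin)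
        then have "adjm T {a,b} c x" using B(4) unfolding adjm_def by blast
        then have "(adjm T {a,b})\<^sup>*\<^sup>* a c \<longleftrightarrow> (adjm T {a,b})\<^sup>*\<^sup>* a x" by (rule reach_step_iff)
        moreover have "(adjm T {a,b})\<^sup>*\<^sup>* a c \<longleftrightarrow> (adjm T {a,b})\<^sup>*\<^sup>* a u" by (rule Pc[OF ne B(3)])
        ultimately have eq: "P w = P x" using Pw Pn[OF B(5)] by blast
        from B(1) have "(s = w \<and> t = x) \<or> (s = x \<and> t = w)" by (simp add: doubleton_eq_iff)
        then show ?thesis using eq by blast
      qed
    qed
    moreover have "P a" using Pn[OF A(4)] by simp
    moreover have "\<not> P b" using Pn[OF A(5)] bridgesD[OF br A(1) ab(2)] by simp
    ultimately show False by simp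
  next
    case (B x c)
    have sym: "(adjm T' {a,b})\<^sup>*\<^sup>* b a" by (rule rtranclp_sym[OF walk]) (rule adjm_sym)
    from B(1) have "(a = w \<and> b = x) \<or> (a = x \<and> b = w)" by (simp add: doubleton_eq_iff)
    then have wx: "(adjm T' {w,x})\<^sup>*\<^sup>* w x"
    proof
      assume "a = w \<and> b = x" then show ?thesis using walk by simp
    next
      assume "a = x \<and> b = w" then show ?thesis using sym by (simp add: insert_commute)
    qed
    define P where "P t = (adjm T {c,x})\<^sup>*\<^sup>* x (if t = w then u else t)" for t
    have Pw: "P w = (adjm T {c,x})\<^sup>*\<^sup>* x u" by (simp add: P_def)
    have Pn: "P t = (adjm T {c,x})\<^sup>*\<^sup>* x t" if "t \<noteq> w" for t using that by (simp add: P_def)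
    have ne: "{u,v} \<noteq> {c,x}"
    proof
      assume "{u,v} = {c,x}" then have "x \<in> {u,v}" by blast
      then show False using B(2) by blast
    qed
    have "P w = P x"
    proof (rule walk_iff_inv[OF wx])
      fix s t assume st: "adjm T' {w,x} s t"
      then have est: "{s,t} \<in> edges T'" "{s,t} \<noteq> {w,x}" unfolding adjm_def by blast+
      from est(1) show "P s = P t"
      proof (cases rule: edgeE)
        case A
        have "c \<notin> {s,t}" using B(3) A(2,3) by blast
        then have "{c,x} \<noteq> {s,t}" by (rule notin)
        then have "adjm T {c,x} s t" using A(1) unfolding adjm_def by metis
        then have "(adjm T {c,x})\<^sup>*\<^sup>* x s \<longleftrightarrow> (adjm T {c,x})\<^sup>*\<^sup>* x t" by (rule reach_step_iff)
        then show ?thesis using Pn A(4,5) by simp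
      next
        case (B y c')
        note B' = B
        note B = \<open>{a,b} = {w,x}\<close> \<open>x \<notin> {u,v}\<close> \<open>c \<in> {u,v}\<close> \<open>{c,x} \<in> edges T\<close> \<open>x \<noteq> w\<close>
        have "y \<noteq> x"
        proof
          assume "y = x" then show False using B'(1) est(2) by simp
        qed
        have "y \<noteq> c" using B'(2) B(3) by blast
        have "{c',y} \<noteq> {c,x}"
        proof
          assume "{c',y} = {c,x}" then have "y \<in> {c,x}" by blast
          then show False using \<open>y \<noteq> x\<close> \<open>y \<noteq> c\<close> by blast
        qed
        then have "adjm T {c,x} c' y" using B'(4) unfolding adjm_def by blast
        then have "(adjm T {c,x})\<^sup>*\<^sup>* x c' \<longleftrightarrow> (adjm T {c,x})\<^sup>*\<^sup>* x y" by (rule reach_step_iff)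
        moreover have "(adjm T {c,x})\<^sup>*\<^sup>* x c' \<longleftrightarrow> (adjm T {c,x})\<^sup>*\<^sup>* x u" by (rule Pc[OF ne B'(3)])
        ultimately have eq: "P w = P y" using Pw Pn[OF B'(5)] by blast
        from B'(1) have "(s = w \<and> t = y) \<or> (s = y \<and> t = w)" by (simp add: doubleton_eq_iff)
        then show ?thesis using eq by blast
      qed
    qed
    moreover have "P x" using Pn[OF B(5)] by simp
    moreover have "\<not> P w"
    proof -
      have "c \<noteq> x" using B(2,3) by blast
      have "{x,c} \<in> edges T" using B(4) by (simp add: insert_commute)
      then have "\<not> (adjm T {x,c})\<^sup>*\<^sup>* x c" using bridgesD[OF br _ \<open>c \<noteq> x\<close>[symmetric]] by blast
      then have "\<not> (adjm T {c,x})\<^sup>*\<^sup>* x c" by (simp add: insert_commute)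
      moreover have "(adjm T {c,x})\<^sup>*\<^sup>* x c \<longleftrightarrow> (adjm T {c,x})\<^sup>*\<^sup>* x u" by (rule Pc[OF ne B(3)])
      ultimately show ?thesis using Pw by blast
    qed
    ultimately show False by simp
  qed
qed

lemma lab_inj': "inj_on (lab T') {..<n}" and lab_range': "lab T' ` {..<n} \<subseteq> nodes T'"
proof -
  have inj: "inj_on (lab T) {..<n}" and rng: "lab T ` {..<n} \<subseteq> nodes T"
    using tree unfolding tree_on_def by auto
  show "inj_on (lab T') {..<n}"
  proof (rule inj_onI)
    fix j k assume jk: "j \<in> {..<n}" "k \<in> {..<n}" "lab T' j = lab T' k"
    show "j = k"
    proof (cases "lab T j \<in> {u,v}"; cases "lab T k \<in> {u,v}")
      assume a: "lab T j \<in> {u,v}" "lab T k \<in> {u,v}"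
      have "lab T j = lab T k"
      proof (rule ccontr)
        assume "lab T j \<noteq> lab T k"
        then have "u \<in> labelled n T \<and> v \<in> labelled n T"
          using a jk unfolding labelled_def by auto
        then show False using notboth by blast
      qed
      then show ?thesis using inj jk by (auto dest: inj_onD)
    next
      assume a: "lab T j \<in> {u,v}" "lab T k \<notin> {u,v}"
      then have "lab T k = w" using jk by (simp add: contract_parts)
      then show ?thesis using a rng jk wfresh by auto
    next
      assume a: "lab T j \<notin> {u,v}" "lab T k \<in> {u,v}"
      then have "lab T j = w" using jk by (simp add: contract_parts)
      then show ?thesis using a rng jk wfresh by auto
    next
      assume a: "lab T j \<notin> {u,v}" "lab T k \<notin> {u,v}"
      then have "lab T j = lab T k" using jk by (simp add: contract_parts)
      then show ?thesis using inj jk by (auto dest: inj_onD)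
    qed
  qed
  show "lab T' ` {..<n} \<subseteq> nodes T'" using rng by (auto simp: contract_parts)
qed

lemma tree': "tree_on n T'"
proof (rule tree_onI)
  show "finite (nodes T')" using tree unfolding tree_on_def contract_parts by auto
  show "nodes T' \<noteq> {}" by (simp add: contract_parts)
qed (rule wf', rule conn', rule br', rule lab_inj', rule lab_range')

lemma card': "card (nodes T') = card (nodes T) - 1"
proof -
  have f: "finite (nodes T)" using tree unfolding tree_on_def by auto
  have "card (nodes T - {u,v}) = card (nodes T) - 2"
    using uV vV une f by (simp add: card_Diff_subset)
  moreover have "card {u,v} \<le> card (nodes T)" using uV vV f by (intro card_mono) auto
  then have "card (nodes T) \<ge> 2" using une by simp
  ultimately show ?thesis using wfresh f unfolding contract_parts by (simp add: card_insert_if)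
qed

end


definition split :: "ptree \<Rightarrow> nat \<Rightarrow> nat \<Rightarrow> nat set \<Rightarrow> ptree" where
 "split T x z N = (nodes T \<union> {z},
    {e\<in>edges T. x\<notin>e} \<union> {{x,y}|y. {x,y}\<in>edges T \<and> y\<notin>N} \<union> {{z,y}|y. y\<in>N} \<union> {{x,z}},
    lab T)"

definition nb :: "ptree \<Rightarrow> nat \<Rightarrow> nat set" where "nb T v = {y. {v,y} \<in> edges T}"

lemma split_parts:
  "nodes (split T x z N) = nodes T \<union> {z}"
  "edges (split T x z N) = {e\<in>edges T. x\<notin>e} \<union> {{x,y}|y. {x,y}\<in>edges T \<and> y\<notin>N} \<union> {{z,y}|y. y\<in>N} \<union> {{x,z}}"
  "lab (split T x z N) = lab T"
  by (simp_all add: split_def nodes_def edges_def lab_def)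

lemma ptree_eqI: "nodes A = nodes B \<Longrightarrow> edges A = edges B \<Longrightarrow> lab A = lab B \<Longrightarrow> A = B"
  by (cases A; cases B) (simp add: nodes_def edges_def lab_def)

lemma degree_nb: assumes "wfg T" shows "degree T v = card (nb T v)"
proof -
  have "bij_betw (\<lambda>y. {v,y}) (nb T v) {e \<in> edges T. v \<in> e}"
  proof (rule bij_betwI')
    fix y y' assume "y \<in> nb T v" "y' \<in> nb T v"
    show "({v,y} = {v,y'}) = (y = y')" by (auto simp: doubleton_eq_iff)
  next
    fix y assume "y \<in> nb T v" then show "{v,y} \<in> {e \<in> edges T. v \<in> e}" by (simp add: nb_def)
  next
    fix e assume e: "e \<in> {e \<in> edges T. v \<in> e}"
    then obtain a b where ab: "e = {a,b}" using assms unfolding wfg_def by blast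
    show "\<exists>y\<in>nb T v. e = {v,y}"
    proof (cases "v = a")
      case True then show ?thesis using e ab by (auto simp: nb_def)
    next
      case False then have "v = b" using e ab by auto
      then show ?thesis using e ab by (auto simp: nb_def insert_commute)
    qed
  qed
  then show ?thesis unfolding degree_def by (simp add: bij_betw_same_card)
qed

lemma nb_sub: "wfg T \<Longrightarrow> nb T v \<subseteq> nodes T"
  unfolding nb_def using wfg_edge by blast

lemma nb_not_self: "wfg T \<Longrightarrow> v \<notin> nb T v"
  unfolding nb_def using wfg_edge by blast

locale spl =
  fixes n :: nat and T :: ptree and x z :: nat and N :: "nat set"
  assumes tree: "tree_on n T" and xV: "x \<in> nodes T" and zV: "z \<notin> nodes T"
    and NN: "N \<subseteq> nb T x"
begin

abbreviation "T' \<equiv> split T x z N"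

lemma wf: "wfg T" using tree tree_on_wfg by blast
lemma br: "bridges T" using tree tree_on_bridges by blast
lemma xz: "x \<noteq> z" using xV zV by auto

lemma Nprop: assumes "y \<in> N" shows "{x,y} \<in> edges T" "y \<in> nodes T" "y \<noteq> x" "y \<noteq> z"
proof -
  show e: "{x,y} \<in> edges T" using assms NN by (auto simp: nb_def)
  show "y \<in> nodes T" "y \<noteq> x" using wfg_edge[OF wf e] by auto
  then show "y \<noteq> z" using zV by auto
qed

lemma edgeE: assumes "{s,t} \<in> edges T'"
  obtains (A) "{s,t} \<in> edges T" "x \<notin> {s,t}" "z \<notin> {s,t}"
  | (B) y where "{s,t} = {x,y}" "{x,y} \<in> edges T" "y \<notin> N" "y \<in> nodes T" "y \<noteq> x" "y \<noteq> z"
  | (C) y where "{s,t} = {z,y}" "y \<in> N" "{x,y} \<in> edges T" "y \<in> nodes T" "y \<noteq> x" "y \<noteq> z"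
  | (D) "{s,t} = {x,z}"
proof -
  consider "{s,t} \<in> edges T" "x \<notin> {s,t}"
    | y where "{s,t} = {x,y}" "{x,y} \<in> edges T" "y \<notin> N"
    | y where "{s,t} = {z,y}" "y \<in> N"
    | "{s,t} = {x,z}"
    using assms unfolding split_parts by blast
  then show ?thesis
  proof cases
    case 1
    then have "s \<in> nodes T" "t \<in> nodes T" using wfg_edge[OF wf] by auto
    then have "z \<notin> {s,t}" using zV by auto
    then show ?thesis using 1 that(1) by blast
  next
    case (2 y)
    have "y \<in> nodes T" "y \<noteq> x" using wfg_edge[OF wf 2(2)] by auto
    moreover have "y \<noteq> z" using \<open>y \<in> nodes T\<close> zV by auto
    ultimately show ?thesis using 2 that(2)[of y] by blast
  next
    case (3 y)
    then show ?thesis using Nprop[of y] that(3)[of y] by blast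
  next
    case 4 then show ?thesis using that(4) by blast
  qed
qed

lemma wf': "wfg T'"
  unfolding wfg_def
proof
  fix e assume e: "e \<in> edges T'"
  then consider "e \<in> edges T" "x\<notin>e"
    | y where "e = {x,y}" "{x,y} \<in> edges T" "y \<notin> N"
    | y where "e = {z,y}" "y \<in> N"
    | "e = {x,z}"
    unfolding split_parts by blast
  then show "\<exists>a b. e = {a, b} \<and> a \<noteq> b \<and> a \<in> nodes T' \<and> b \<in> nodes T'"
  proof cases
    case 1
    then obtain a b where ab: "e = {a,b}" "a \<noteq> b" "a \<in> nodes T" "b \<in> nodes T"
      using wf unfolding wfg_def by blast
    then have "a \<in> nodes T'" "b \<in> nodes T'" unfolding split_parts by auto
    then show ?thesis using ab by blast
  next
    case (2 y)
    have "y \<in> nodes T" "y \<noteq> x" using wfg_edge[OF wf 2(2)] by auto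
    then have "x \<in> nodes T'" "y \<in> nodes T'" using xV unfolding split_parts by auto
    then show ?thesis using 2 \<open>y \<noteq> x\<close> by blast
  next
    case (3 y)
    then have "z \<in> nodes T'" "y \<in> nodes T'" "y \<noteq> z" using Nprop[of y] unfolding split_parts by auto
    then show ?thesis using 3 by blast
  next
    case 4
    then have "z \<in> nodes T'" "x \<in> nodes T'" using xV unfolding split_parts by auto
    then show ?thesis using 4 xz by blast
  qed
qed

lemma step_x: assumes "{x,y} \<in> edges T" shows "(adjacent T')\<^sup>*\<^sup>* x y"
proof (cases "y \<in> N")
  case True
  have "{x,z} \<in> edges T'" "{z,y} \<in> edges T'" using True unfolding split_parts by blast+
  then show ?thesis unfolding adjacent_def by (meson rtranclp.rtrancl_into_rtrancl r_into_rtranclp)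
next
  case False
  have "{x,y} \<in> edges T'" using False assms unfolding split_parts by blast
  then show ?thesis unfolding adjacent_def by blast
qed

lemma conn': "connected_graph T'"
proof -
  have symA: "\<And>p q. adjacent T' p q \<Longrightarrow> adjacent T' q p" by (rule adjacent_sym)
  have fromx: "(adjacent T')\<^sup>*\<^sup>* x t" if "t \<in> nodes T'" for t
  proof (cases "t = z")
    case True
    have "{x,z} \<in> edges T'" unfolding split_parts by blast
    then show ?thesis using True unfolding adjacent_def by blast
  next
    case False
    then have t: "t \<in> nodes T" using that unfolding split_parts by auto
    have "(adjacent T)\<^sup>*\<^sup>* x t" using tree xV t unfolding tree_on_def connected_graph_def by blast
    then have "(adjacent T')\<^sup>*\<^sup>* (id x) (id t)"
    proof (rule rtranclp_map)
      fix p q assume pq: "adjacent T p q"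
      then have e: "{p,q} \<in> edges T" by (simp add: adjacent_def)
      show "(adjacent T')\<^sup>*\<^sup>* (id p) (id q)"
      proof (cases "p = x")
        case True then show ?thesis using step_x e by simp
      next
        case False
        show ?thesis
        proof (cases "q = x")
          case True
          then have "{x,p} \<in> edges T" using e by (simp add: insert_commute)
          then have "(adjacent T')\<^sup>*\<^sup>* x p" by (rule step_x)
          then have "(adjacent T')\<^sup>*\<^sup>* p x" using rtranclp_sym[of "adjacent T'" x p] adjacent_sym by blast
          then show ?thesis using True by simp
        next
          case False
          then have "{p,q} \<in> edges T'" using \<open>p \<noteq> x\<close> e unfolding split_parts by blast
          then have "adjacent T' p q" by (simp add: adjacent_def)
          then show ?thesis by simp
        qed
      qed
    qed
    then show ?thesis by simp
  qed
  show ?thesis unfolding connected_graph_def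
  proof (intro ballI)
    fix a b assume "a \<in> nodes T'" "b \<in> nodes T'"
    then have "(adjacent T')\<^sup>*\<^sup>* x a" "(adjacent T')\<^sup>*\<^sup>* x b"
      using fromx by blast+
    then have "(adjacent T')\<^sup>*\<^sup>* a x" "(adjacent T')\<^sup>*\<^sup>* x b"
      using rtranclp_sym[of "adjacent T'" x a] adjacent_sym by blast+
    then show "(adjacent T')\<^sup>*\<^sup>* a b" by (rule rtranclp_trans)
  qed
qed

definition pi :: "nat \<Rightarrow> nat" where "pi t = (if t = z then x else t)"

definition rho :: "nat set \<Rightarrow> nat set" where
  "rho e = (if \<exists>y\<in>N. e = {x,y} then (e - {x}) \<union> {z} else e)"

lemma proj_edge: assumes "{s,t} \<in> edges T'" "{s,t} \<noteq> {x,z}"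
  shows "{pi s, pi t} \<in> edges T" "pi s \<noteq> pi t" "rho {pi s, pi t} = {s,t}"
proof -
  have "({pi s, pi t} \<in> edges T \<and> pi s \<noteq> pi t) \<and> rho {pi s, pi t} = {s,t}"
    using assms(1)
  proof (cases rule: edgeE)
    case A
    then have ne: "s \<noteq> t" using wfg_edge[OF wf A(1)] by blast
    have "pi s = s" "pi t = t" using A by (auto simp: pi_def)
    moreover have "\<not> (\<exists>y\<in>N. {s,t} = {x,y})" using A(2) by blast
    ultimately show ?thesis using A ne by (simp add: rho_def)
  next
    case (B y)
    from B(1) have st: "(s = x \<and> t = y) \<or> (s = y \<and> t = x)" by (simp add: doubleton_eq_iff)
    have pxy: "{pi s, pi t} = {x,y}" using st B xz by (auto simp: pi_def)
    have "\<not> (\<exists>y'\<in>N. {x,y} = {x,y'})"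
    proof
      assume "\<exists>y'\<in>N. {x,y} = {x,y'}"
      then obtain y' where "y' \<in> N" "{x,y} = {x,y'}" by blast
      then have "y = y'" by (auto simp: doubleton_eq_iff)
      then show False using B(3) \<open>y' \<in> N\<close> by blast
    qed
    then have "rho {x,y} = {x,y}" by (simp add: rho_def)
    moreover have "pi s \<noteq> pi t" using st B xz by (auto simp: pi_def)
    ultimately show ?thesis using pxy B by simp
  next
    case (C y)
    from C(1) have st: "(s = z \<and> t = y) \<or> (s = y \<and> t = z)" by (simp add: doubleton_eq_iff)
    have pxy: "{pi s, pi t} = {x,y}" using st C by (auto simp: pi_def)
    have "rho {x,y} = ({x,y} - {x}) \<union> {z}" using C(2) by (auto simp: rho_def)
    also have "\<dots> = {z,y}" using C(5) by auto
    finally have "rho {x,y} = {s,t}" using C(1) by simp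
    moreover have "pi s \<noteq> pi t" using st C by (auto simp: pi_def)
    ultimately show ?thesis using pxy C by simp
  next
    case D then show ?thesis using assms(2) by simp
  qed
  then show "{pi s, pi t} \<in> edges T" "pi s \<noteq> pi t" "rho {pi s, pi t} = {s,t}" by auto
qed

lemma notP_x: assumes "(\<lambda>p q. {p,q} \<in> edges T \<and> x \<notin> {p,q})\<^sup>*\<^sup>* y x" shows "y = x"
  using assms by (cases rule: rtranclp.cases) auto

lemma br': "bridges T'"
  unfolding bridges_def
proof (intro allI impI notI)
  fix a b assume ab: "{a,b} \<in> edges T'" "a \<noteq> b" and walk: "(adjm T' {a,b})\<^sup>*\<^sup>* a b"
  show False
  proof (cases "{a,b} = {x,z}")
    case False
    have e0: "{pi a, pi b} \<in> edges T" "pi a \<noteq> pi b" using proj_edge[OF ab(1) False] by auto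
    have "(adjm T {pi a, pi b})\<^sup>*\<^sup>* (pi a) (pi b)"
    proof (rule rtranclp_map[OF walk])
      fix s t assume st: "adjm T' {a,b} s t"
      then have est: "{s,t} \<in> edges T'" "{s,t} \<noteq> {a,b}" unfolding adjm_def by blast+
      show "(adjm T {pi a, pi b})\<^sup>*\<^sup>* (pi s) (pi t)"
      proof (cases "{s,t} = {x,z}")
        case True
        then have "pi s = pi t" by (auto simp: doubleton_eq_iff pi_def)
        then show ?thesis by simp
      next
        case False': False
        have "{pi s, pi t} \<in> edges T" using proj_edge[OF est(1) False'] by simp
        moreover have "{pi s, pi t} \<noteq> {pi a, pi b}"
        proof
          assume "{pi s, pi t} = {pi a, pi b}"
          then have "rho {pi s, pi t} = rho {pi a, pi b}" by simp
          then have "{s,t} = {a,b}" using proj_edge(3)[OF est(1) False'] proj_edge(3)[OF ab(1) False] by simp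
          then show False using est(2) by simp
        qed
        ultimately show ?thesis unfolding adjm_def by blast
      qed
    qed
    then show False using bridgesD[OF br e0] by blast
  next
    case True
    have sym: "(adjm T' {a,b})\<^sup>*\<^sup>* b a" by (rule rtranclp_sym[OF walk]) (rule adjm_sym)
    from True have "(a = x \<and> b = z) \<or> (a = z \<and> b = x)" by (simp add: doubleton_eq_iff)
    then have wx: "(adjm T' {x,z})\<^sup>*\<^sup>* x z"
    proof
      assume "a = x \<and> b = z" then show ?thesis using walk by simp
    next
      assume "a = z \<and> b = x" then show ?thesis using sym by (simp add: insert_commute)
    qed
    define R where "R p q = ({p,q} \<in> edges T \<and> x \<notin> {p,q})" for p q
    define P where "P t = (t = z \<or> (\<exists>y\<in>N. R\<^sup>*\<^sup>* y t))" for t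
    have Rsym: "R p q \<Longrightarrow> R q p" for p q unfolding R_def by (simp add: insert_commute)
    have Px: "\<not> P x"
    proof
      assume "P x"
      then obtain y where "y \<in> N" "R\<^sup>*\<^sup>* y x" using xz unfolding P_def by auto
      then have "y = x" using notP_x unfolding R_def by blast
      then show False using Nprop(3)[OF \<open>y \<in> N\<close>] by simp
    qed
    have Pz: "P z" by (simp add: P_def)
    have "P x = P z"
    proof (rule walk_iff_inv[OF wx])
      fix s t assume st: "adjm T' {x,z} s t"
      then have est: "{s,t} \<in> edges T'" "{s,t} \<noteq> {x,z}" unfolding adjm_def by blast+
      from est(1) show "P s = P t"
      proof (cases rule: edgeE)
        case A
        then have "R s t" unfolding R_def by blast
        then have "R\<^sup>*\<^sup>* y s \<longleftrightarrow> R\<^sup>*\<^sup>* y t" for y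
          using Rsym by (meson rtranclp.rtrancl_into_rtrancl)
        moreover have "s \<noteq> z" "t \<noteq> z" using A by auto
        ultimately show ?thesis unfolding P_def by simp
      next
        case (B y)
        have "\<not> P y"
        proof
          assume "P y"
          then obtain y' where y': "y' \<in> N" "R\<^sup>*\<^sup>* y' y" using B unfolding P_def by auto
          have "(adjm T {x,y})\<^sup>*\<^sup>* (id y') (id y)"
          proof (rule rtranclp_map[OF y'(2)])
            fix p q assume "R p q"
            then have "adjm T {x,y} p q" unfolding R_def adjm_def by blast
            then show "(adjm T {x,y})\<^sup>*\<^sup>* (id p) (id q)" by simp
          qed
          moreover have "adjm T {x,y} x y'"
          proof -
            have "y' \<noteq> y" using y'(1) B(3) by blast
            then have "{x,y'} \<noteq> {x,y}" by (auto simp: doubleton_eq_iff)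
            then show ?thesis using Nprop(1)[OF y'(1)] unfolding adjm_def by blast
          qed
          ultimately have "(adjm T {x,y})\<^sup>*\<^sup>* x y"
            by (simp add: converse_rtranclp_into_rtranclp)
          then show False using bridgesD[OF br B(2)] B(5) by metis
        qed
        moreover from B(1) have "(s = x \<and> t = y) \<or> (s = y \<and> t = x)" by (simp add: doubleton_eq_iff)
        ultimately show ?thesis using Px by blast
      next
        case (C y)
        have "P y" using C(2) unfolding P_def by blast
        moreover from C(1) have "(s = z \<and> t = y) \<or> (s = y \<and> t = z)" by (simp add: doubleton_eq_iff)
        ultimately show ?thesis using Pz by blast
      next
        case D then show ?thesis using est(2) by simp
      qed
    qed
    then show False using Px Pz by simp
  qed
qed

lemma tree': "tree_on n T'"
proof (rule tree_onI)
  show "finite (nodes T')" using tree unfolding tree_on_def split_parts by auto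
  show "nodes T' \<noteq> {}" by (simp add: split_parts)
  show "inj_on (lab T') {..<n}" using tree unfolding tree_on_def split_parts by auto
  show "lab T' ` {..<n} \<subseteq> nodes T'" using tree unfolding tree_on_def split_parts by auto
qed (rule wf', rule conn', rule br')

lemma nb_x: "nb T' x = (nb T x - N) \<union> {z}"
proof (intro set_eqI iffI)
  fix y assume "y \<in> nb T' x"
  then have "{x,y} \<in> edges T'" by (simp add: nb_def)
  then show "y \<in> (nb T x - N) \<union> {z}"
  proof (cases rule: edgeE)
    case A then show ?thesis by simp
  next
    case (B y')
    then have "y = y'" by (auto simp: doubleton_eq_iff)
    then show ?thesis using B by (simp add: nb_def)
  next
    case (C y')
    then show ?thesis using xz by (auto simp: doubleton_eq_iff)
  next
    case D then show ?thesis by (auto simp: doubleton_eq_iff)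
  qed
next
  fix y assume "y \<in> (nb T x - N) \<union> {z}"
  then have "{x,y} \<in> edges T'" unfolding split_parts nb_def by blast
  then show "y \<in> nb T' x" by (simp add: nb_def)
qed

lemma nb_z: "nb T' z = N \<union> {x}"
proof (intro set_eqI iffI)
  fix y assume "y \<in> nb T' z"
  then have "{z,y} \<in> edges T'" by (simp add: nb_def)
  then show "y \<in> N \<union> {x}"
  proof (cases rule: edgeE)
    case A then show ?thesis by simp
  next
    case (B y')
    then show ?thesis using xz by (auto simp: doubleton_eq_iff)
  next
    case (C y')
    then have "y = y'" by (auto simp: doubleton_eq_iff)
    then show ?thesis using C by simp
  next
    case D then show ?thesis by (auto simp: doubleton_eq_iff)
  qed
next
  fix y assume "y \<in> N \<union> {x}"
  then have "{z,y} \<in> edges T'" unfolding split_parts by (auto simp: insert_commute)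
  then show "y \<in> nb T' z" by (simp add: nb_def)
qed

lemma nb_other: assumes "v \<in> nodes T" "v \<noteq> x"
  shows "nb T' v = (if v \<in> N then insert z (nb T v - {x}) else nb T v)"
proof (intro set_eqI iffI)
  have vz: "v \<noteq> z" using assms zV by auto
  fix y assume "y \<in> nb T' v"
  then have "{v,y} \<in> edges T'" by (simp add: nb_def)
  then show "y \<in> (if v \<in> N then insert z (nb T v - {x}) else nb T v)"
  proof (cases rule: edgeE)
    case A then show ?thesis by (auto simp: nb_def)
  next
    case (B y')
    then have "v = y'" "y = x" using assms(2) by (auto simp: doubleton_eq_iff)
    then show ?thesis using B by (auto simp: nb_def insert_commute)
  next
    case (C y')
    then have "v = y'" "y = z" using vz by (auto simp: doubleton_eq_iff)
    then show ?thesis using C by auto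
  next
    case D then show ?thesis using assms(2) vz by (auto simp: doubleton_eq_iff)
  qed
next
  have vz: "v \<noteq> z" using assms zV by auto
  fix y assume y: "y \<in> (if v \<in> N then insert z (nb T v - {x}) else nb T v)"
  show "y \<in> nb T' v"
  proof (cases "v \<in> N")
    case True
    then have "y = z \<or> (y \<in> nb T v \<and> y \<noteq> x)" using y by auto
    then have "{v,y} \<in> edges T'"
    proof
      assume "y = z" then show ?thesis using True unfolding split_parts by (auto simp: insert_commute)
    next
      assume "y \<in> nb T v \<and> y \<noteq> x"
      then show ?thesis using assms(2) unfolding split_parts nb_def by blast
    qed
    then show ?thesis by (simp add: nb_def)
  next
    case False
    then have yv: "{v,y} \<in> edges T" using y by (simp add: nb_def)
    have "{v,y} \<in> edges T'"
    proof (cases "y = x")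
      case True
      then have "{x,v} \<in> edges T" using yv by (simp add: insert_commute)
      then show ?thesis using True False unfolding split_parts by (auto simp: insert_commute)
    next
      case False
      then show ?thesis using yv assms(2) unfolding split_parts by blast
    qed
    then show ?thesis by (simp add: nb_def)
  qed
qed

lemma finV: "finite (nodes T)" using tree unfolding tree_on_def by blast

lemma fin_nb: "finite (nb T v)"
  using nb_sub[OF wf] finV by (rule finite_subset)

lemma deg_x: "degree T' x = card (nb T x - N) + 1"
proof -
  have "z \<notin> nb T x - N" using nb_sub[OF wf] zV by blast
  then show ?thesis using degree_nb[OF wf'] nb_x fin_nb by simp
qed

lemma deg_z: "degree T' z = card N + 1"
proof -
  have "x \<notin> N" using Nprop(3) by blast
  moreover have "finite N" using NN fin_nb finite_subset by blast
  ultimately show ?thesis using degree_nb[OF wf'] nb_z by simp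
qed

lemma deg_other: assumes "v \<in> nodes T" "v \<noteq> x" shows "degree T' v = degree T v"
proof (cases "v \<in> N")
  case True
  have "x \<in> nb T v" using Nprop(1)[OF True] by (simp add: nb_def insert_commute)
  moreover have "z \<notin> nb T v" using nb_sub[OF wf] zV by blast
  moreover have "card (nb T v) > 0" using \<open>x \<in> nb T v\<close> fin_nb card_gt_0_iff by blast
  ultimately have "card (insert z (nb T v - {x})) = card (nb T v)"
    using fin_nb by (simp add: card_Diff_singleton)
  then show ?thesis using degree_nb[OF wf'] degree_nb[OF wf] nb_other[OF assms] True by simp
next
  case False
  then show ?thesis using degree_nb[OF wf'] degree_nb[OF wf] nb_other[OF assms] by simp
qed

lemma contract_split: assumes "lab T ` UNIV \<subseteq> nodes T" shows "contract T' x z x = T"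
proof (rule ptree_eqI)
  show "nodes (contract T' x z x) = nodes T"
    using xV zV unfolding contract_parts split_parts by auto
  show "lab (contract T' x z x) = lab T"
  proof
    fix j have "lab T j \<noteq> z" using assms zV by blast
    then show "lab (contract T' x z x) j = lab T j" unfolding contract_parts split_parts by auto
  qed
  show "edges (contract T' x z x) = edges T"
  proof (intro set_eqI iffI)
    fix e assume "e \<in> edges (contract T' x z x)"
    then consider "e \<in> edges T'" "e \<inter> {x,z} = {}"
      | y where "e = {x,y}" "y \<notin> {x,z}" "{x,y} \<in> edges T' \<or> {z,y} \<in> edges T'"
      unfolding contract_parts by blast
    then show "e \<in> edges T"
    proof cases
      case 1
      then have "x \<notin> e" "z \<notin> e" by auto
      have "e \<in> {e\<in>edges T. x\<notin>e} \<or> e \<in> {{x,y}|y. {x,y}\<in>edges T \<and> y\<notin>N} \<or> e \<in> {{z,y}|y. y\<in>N} \<or> e \<in> {{x,z}}"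
        using 1(1) unfolding split_parts by blast
      then show ?thesis using \<open>x \<notin> e\<close> \<open>z \<notin> e\<close> by blast
    next
      case (2 y)
      from 2(3) show ?thesis
      proof
        assume "{x,y} \<in> edges T'"
        then show ?thesis
        proof (cases rule: edgeE)
          case A then show ?thesis by simp
        next
          case (B y')
          then show ?thesis using 2 by simp
        next
          case (C y')
          then have "x = y'" using xz by (simp add: doubleton_eq_iff)
          then show ?thesis using C(5) by simp
        next
          case D then have "y = z" using xz by (auto simp: doubleton_eq_iff)
          then show ?thesis using 2(2) by simp
        qed
      next
        assume "{z,y} \<in> edges T'"
        then show ?thesis
        proof (cases rule: edgeE)
          case A then show ?thesis by simp
        next
          case (B y')
          then have "z = y'" using xz by (simp add: doubleton_eq_iff)
          then show ?thesis using B(6) by simp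
        next
          case (C y')
          then have "y = y'" by (simp add: doubleton_eq_iff)
          then show ?thesis using C(3) 2(1) by simp
        next
          case D then have "y = x" using xz by (simp add: doubleton_eq_iff)
          then show ?thesis using 2(2) by simp
        qed
      qed
    qed
  next
    fix e assume e: "e \<in> edges T"
    obtain a b where ab: "e = {a,b}" "a \<noteq> b" "a \<in> nodes T" "b \<in> nodes T"
      using e wf unfolding wfg_def by blast
    have zn: "z \<notin> e" using ab zV by auto
    show "e \<in> edges (contract T' x z x)"
    proof (cases "x \<in> e")
      case False
      have "e \<in> {e\<in>edges T. x\<notin>e}" using e False by blast
      then have "e \<in> edges T'" unfolding split_parts by (intro UnI1)
      then have "e \<in> {e \<in> edges T'. e \<inter> {x,z} = {}}" using False zn by blast
      then show ?thesis unfolding contract_parts by (rule UnI1)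
    next
      case True
      define y where "y = (if a = x then b else a)"
      have y: "e = {x,y}" "y \<noteq> x" "y \<in> nodes T" using True ab unfolding y_def by auto
      then have "y \<noteq> z" using zV by auto
      have "{x,y} \<in> edges T' \<or> {z,y} \<in> edges T'"
      proof (cases "y \<in> N")
        case True
        then have "{z,y} \<in> {{z,y}|y. y\<in>N}" by blast
        then have "{z,y} \<in> edges T'" unfolding split_parts by (intro UnI1 UnI2)
        then show ?thesis by blast
      next
        case False then have "{x,y} \<in> {{x,y}|y. {x,y}\<in>edges T \<and> y\<notin>N}" using e y by blast
        then have "{x,y} \<in> edges T'" unfolding split_parts by (intro UnI1 UnI2)
        then show ?thesis by blast
      qed
      then have "e \<in> {{x,y} | y. y \<notin> {x,z} \<and> ({x,y} \<in> edges T' \<or> {z,y} \<in> edges T')}"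
        using y \<open>y \<noteq> z\<close> by blast
      then show ?thesis unfolding contract_parts by (rule UnI2)
    qed
  qed
qed

end

definition star :: "nat \<Rightarrow> ptree" where
  "star n = ({..<n}, {{0,j}|j. 0<j \<and> j<n}, \<lambda>j. if j<n then j else 0)"

lemma star_tree: assumes "n \<ge> 1" shows "tree_on n (star n)"
proof -
  have parts: "nodes (star n) = {..<n}" "edges (star n) = {{0,j}|j. 0<j \<and> j<n}"
    "lab (star n) = (\<lambda>j. if j<n then j else 0)"
    by (simp_all add: star_def nodes_def edges_def lab_def)
  show ?thesis
  proof (rule tree_onI)
    show "wfg (star n)" unfolding wfg_def
    proof
      fix e assume "e \<in> edges (star n)"
      then obtain j where j: "e = {0,j}" "0 < j" "j < n" unfolding parts by blast
      then have "0 \<in> nodes (star n)" "j \<in> nodes (star n)" "0 \<noteq> j" unfolding parts by auto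
      then show "\<exists>x y. e = {x, y} \<and> x \<noteq> y \<and> x \<in> nodes (star n) \<and> y \<in> nodes (star n)"
        using j by blast
    qed
    show "connected_graph (star n)" unfolding connected_graph_def
    proof (intro ballI)
      fix a b assume ab: "a \<in> nodes (star n)" "b \<in> nodes (star n)"
      have to0: "(adjacent (star n))\<^sup>*\<^sup>* 0 c" if "c < n" for c
      proof (cases "c = 0")
        case False
        then have "{0,c} \<in> edges (star n)" using that unfolding parts by blast
        then have "adjacent (star n) 0 c" unfolding adjacent_def by simp
        then show ?thesis by (rule r_into_rtranclp)
      qed simp
      have "a < n" "b < n" using ab unfolding parts by auto
      then have "(adjacent (star n))\<^sup>*\<^sup>* 0 a" "(adjacent (star n))\<^sup>*\<^sup>* 0 b" using to0 by auto
      then have "(adjacent (star n))\<^sup>*\<^sup>* a 0" "(adjacent (star n))\<^sup>*\<^sup>* 0 b"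
        using rtranclp_sym[of "adjacent (star n)" 0 a] adjacent_sym by blast+
      then show "(adjacent (star n))\<^sup>*\<^sup>* a b" by (rule rtranclp_trans)
    qed
    show "bridges (star n)" unfolding bridges_def
    proof (intro allI impI notI)
      fix a b assume ab: "{a,b} \<in> edges (star n)" "a \<noteq> b" and walk: "(adjm (star n) {a,b})\<^sup>*\<^sup>* a b"
      obtain j where j: "{a,b} = {0,j}" "0 < j" using ab(1) unfolding parts by blast
      have "(a \<noteq> j) = (b \<noteq> j)"
      proof (rule walk_iff_inv[OF walk])
        fix s t assume st: "adjm (star n) {a,b} s t"
        then have e1: "{s,t} \<in> edges (star n)" and e2: "{s,t} \<noteq> {0,j}" unfolding adjm_def using j(1) by simp_all
        from e1 obtain k where k: "{s,t} = {0,k}" "0<k" unfolding parts by blast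
        have "k \<noteq> j" using k(1) e2 by blast
        have "(s = 0 \<and> t = k) \<or> (s = k \<and> t = 0)" using k(1) by (simp add: doubleton_eq_iff)
        then have "s \<noteq> j" "t \<noteq> j" using \<open>k \<noteq> j\<close> j(2) by auto
        then show "(s \<noteq> j) = (t \<noteq> j)" by simp
      qed
      moreover have "(a = 0 \<and> b = j) \<or> (a = j \<and> b = 0)" using j(1) by (simp add: doubleton_eq_iff)
      ultimately show False using j(2) by auto
    qed
    show "finite (nodes (star n))" unfolding parts by simp
    have "0 \<in> {..<n}" using assms by simp
    then show "nodes (star n) \<noteq> {}" unfolding parts by blast
    show "inj_on (lab (star n)) {..<n}" unfolding parts inj_on_def by simp
    show "lab (star n) ` {..<n} \<subseteq> nodes (star n)" unfolding parts by auto
  qed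
qed


lemma hamming_sym: "hamming m x y = hamming m y x"
proof -
  have "{i. i < m \<and> x i \<noteq> y i} = {i. i < m \<and> y i \<noteq> x i}" by auto
  then show ?thesis unfolding hamming_def by simp
qed

lemma hamming_cong: assumes "\<And>i. i < m \<Longrightarrow> x i = x' i \<and> y i = y' i"
  shows "hamming m x y = hamming m x' y'"
proof -
  have "{i. i < m \<and> x i \<noteq> y i} = {i. i < m \<and> x' i \<noteq> y' i}" using assms by auto
  then show ?thesis unfolding hamming_def by simp
qed

lemma hamming_self: "hamming m x x = 0"
  unfolding hamming_def by simp

lemma hamming_tri: "hamming m x z \<le> hamming m x y + hamming m y z"
proof -
  have "{i. i < m \<and> x i \<noteq> z i} \<subseteq> {i. i < m \<and> x i \<noteq> y i} \<union> {i. i < m \<and> y i \<noteq> z i}" by auto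
  then have "card {i. i < m \<and> x i \<noteq> z i} \<le> card ({i. i < m \<and> x i \<noteq> y i} \<union> {i. i < m \<and> y i \<noteq> z i})"
    by (intro card_mono) auto
  also have "\<dots> \<le> card {i. i < m \<and> x i \<noteq> y i} + card {i. i < m \<and> y i \<noteq> z i}" by (rule card_Un_le)
  finally show ?thesis unfolding hamming_def .
qed

lemma hamming_sum: "hamming m x y = (\<Sum>i<m. if x i \<noteq> y i then 1 else 0)"
proof -
  have "{i. i < m \<and> x i \<noteq> y i} = {i\<in>{..<m}. x i \<noteq> y i}" by auto
  then have "hamming m x y = card {i\<in>{..<m}. x i \<noteq> y i}" unfolding hamming_def by simp
  also have "\<dots> = (\<Sum>i\<in>{i\<in>{..<m}. x i \<noteq> y i}. 1)" by simp
  also have "\<dots> = (\<Sum>i<m. if x i \<noteq> y i then 1 else 0)" by (rule sum.inter_filter) simp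
  finally show ?thesis .
qed

lemma edge_cost_pair: "edge_cost m f {a,b} = hamming m (f a) (f b)"
  unfolding edge_cost_def
proof (rule the_equality)
  show "\<exists>x y. {a, b} = {x, y} \<and> hamming m (f a) (f b) = hamming m (f x) (f y)" by blast
next
  fix c assume "\<exists>x y. {a, b} = {x, y} \<and> c = hamming m (f x) (f y)"
  then obtain x y where "{a,b} = {x,y}" "c = hamming m (f x) (f y)" by blast
  then show "c = hamming m (f a) (f b)" using hamming_sym by (auto simp: doubleton_eq_iff)
qed

lemma tree_on_fin: "tree_on n T \<Longrightarrow> finite (nodes T)" by (simp add: tree_on_def)
lemma tree_on_inj: "tree_on n T \<Longrightarrow> inj_on (lab T) {..<n}" by (simp add: tree_on_def)
lemma tree_on_rng: "tree_on n T \<Longrightarrow> lab T ` {..<n} \<subseteq> nodes T" by (simp add: tree_on_def)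
lemma tree_on_conn: "tree_on n T \<Longrightarrow> connected_graph T" by (simp add: tree_on_def)

definition Dg :: "nat set set \<Rightarrow> (nat \<Rightarrow> 'a) \<Rightarrow> nat" where
  "Dg E \<phi> = (\<Sum>e\<in>E. card (\<phi> ` e) - 1)"

definition Cc :: "ptree \<Rightarrow> (nat \<Rightarrow> 'a tuple) \<Rightarrow> nat \<Rightarrow> nat" where
  "Cc T f i = Dg (edges T) (\<lambda>t. f t i)"

lemma card_pair_m1: "card {p, q} - 1 = (if p \<noteq> q then 1 else 0)"
  by (cases "p = q") auto

lemma fit_cost_Cc: assumes "wfg T" "finite (nodes T)"
  shows "fit_cost m T f = (\<Sum>i<m. Cc T f i)"
proof -
  have "fit_cost m T f = (\<Sum>e\<in>edges T. \<Sum>i<m. card ((\<lambda>t. f t i) ` e) - 1)"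
    unfolding fit_cost_def
  proof (rule sum.cong[OF refl])
    fix e assume "e \<in> edges T"
    then obtain a b where ab: "e = {a,b}" using assms(1) unfolding wfg_def by blast
    show "edge_cost m f e = (\<Sum>i<m. card ((\<lambda>t. f t i) ` e) - 1)"
      unfolding ab edge_cost_pair hamming_sum image_insert image_empty
      by (intro sum.cong refl) (simp only: card_pair_m1)
  qed
  also have "\<dots> = (\<Sum>i<m. \<Sum>e\<in>edges T. card ((\<lambda>t. f t i) ` e) - 1)" by (rule sum.swap)
  finally show ?thesis unfolding Cc_def Dg_def .
qed

lemma edge_cost_cong: assumes "\<And>t i. t \<in> e \<Longrightarrow> i < m \<Longrightarrow> f t i = g t i"
  shows "edge_cost m f e = edge_cost m g e"
proof -
  have "(\<lambda>c. \<exists>x y. e = {x,y} \<and> c = hamming m (f x) (f y)) = (\<lambda>c. \<exists>x y. e = {x,y} \<and> c = hamming m (g x) (g y))"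
  proof (intro ext iffI)
    fix c assume "\<exists>x y. e = {x,y} \<and> c = hamming m (f x) (f y)"
    then obtain x y where xy: "e = {x,y}" "c = hamming m (f x) (f y)" by blast
    then have "hamming m (f x) (f y) = hamming m (g x) (g y)" using assms by (intro hamming_cong) auto
    then show "\<exists>x y. e = {x,y} \<and> c = hamming m (g x) (g y)" using xy by blast
  next
    fix c assume "\<exists>x y. e = {x,y} \<and> c = hamming m (g x) (g y)"
    then obtain x y where xy: "e = {x,y}" "c = hamming m (g x) (g y)" by blast
    then have "hamming m (f x) (f y) = hamming m (g x) (g y)" using assms by (intro hamming_cong) auto
    then show "\<exists>x y. e = {x,y} \<and> c = hamming m (f x) (f y)" using xy by metis
  qed
  then show ?thesis unfolding edge_cost_def by simp
qed

lemma sum_map_le: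
  fixes c :: "'b \<Rightarrow> nat" and c' :: "'c \<Rightarrow> nat"
  assumes "finite E" "finite E'" "E' \<subseteq> Z \<union> \<phi> ` E" "\<And>e. e \<in> Z \<Longrightarrow> c' e = 0"
    "\<And>e. e \<in> E \<Longrightarrow> c' (\<phi> e) \<le> c e"
  shows "sum c' E' \<le> sum c E"
proof -
  have "sum c' E' = sum c' (E' \<inter> \<phi> ` E) + sum c' (E' - \<phi> ` E)"
    using assms(2) by (metis sum.Int_Diff)
  moreover have "sum c' (E' - \<phi> ` E) = 0"
    using assms(3,4) by (intro sum.neutral) blast
  moreover have "sum c' (E' \<inter> \<phi> ` E) \<le> sum c' (\<phi> ` E)"
    using assms(1) by (intro sum_mono2) auto
  moreover have "sum c' (\<phi> ` E) \<le> sum (c' \<circ> \<phi>) E"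
    using assms(1) by (rule sum_image_le) simp
  moreover have "sum (c' \<circ> \<phi>) E \<le> sum c E"
    using assms(5) by (intro sum_mono) simp
  ultimately show ?thesis by linarith
qed

locale mpc =
  fixes m :: nat and Sig :: "nat \<Rightarrow> 'a set" and n :: nat and S :: "nat \<Rightarrow> 'a tuple"
  assumes n2: "n \<ge> 2" and m1: "m \<ge> 1"
    and SigNE: "\<forall>i<m. Sig i \<noteq> {}"
    and SinSig: "\<forall>j<n. \<forall>i<m. S j i \<in> Sig i"
begin

abbreviation "fit \<equiv> is_fit m Sig n S"
abbreviation "best \<equiv> best_fit m Sig n S"
abbreviation "MPv \<equiv> MP m Sig n S"

lemma fit_exists: assumes "tree_on n T" shows "\<exists>f. fit T f"
proof -
  have inj: "inj_on (lab T) {..<n}" using assms by (rule tree_on_inj)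
  define f where "f v = (if v \<in> lab T ` {..<n} then S (inv_into {..<n} (lab T) v)
      else (\<lambda>i. SOME s. s \<in> Sig i))" for v
  have "fit T f" unfolding is_fit_def
  proof (intro conjI ballI allI impI)
    fix v i assume "v \<in> nodes T" "i < m"
    show "f v i \<in> Sig i"
    proof (cases "v \<in> lab T ` {..<n}")
      case True
      then have "inv_into {..<n} (lab T) v < n" by (meson inv_into_into lessThan_iff)
      then show ?thesis using True SinSig \<open>i < m\<close> unfolding f_def by simp
    next
      case False
      then show ?thesis using SigNE \<open>i < m\<close> unfolding f_def by (simp add: some_in_eq)
    qed
  next
    fix j i assume "j < n" "i < m"
    then show "f (lab T j) i = S j i" unfolding f_def using inj by (simp add: inv_into_f_f)
  qed
  then show ?thesis by blast
qed

lemma MP_le: "fit T f \<Longrightarrow> MPv T \<le> fit_cost m T f"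
  unfolding MP_def by (rule Least_le) blast

lemma best_exists: assumes "tree_on n T" shows "\<exists>f. best T f"
proof -
  obtain f where "fit T f" using fit_exists[OF assms] by blast
  then have "\<exists>c. \<exists>f. fit T f \<and> c = fit_cost m T f" by blast
  then have "\<exists>f. fit T f \<and> MPv T = fit_cost m T f" unfolding MP_def by (rule LeastI_ex)
  then show ?thesis unfolding best_fit_def by metis
qed

lemma fit_cost_eq: "tree_on n T \<Longrightarrow> fit_cost m T f = (\<Sum>i<m. Cc T f i)"
  using fit_cost_Cc tree_on_wfg tree_on_fin by blast

lemma Cc_dep: "(\<And>t. f t i = g t i) \<Longrightarrow> Cc T f i = Cc T g i"
  unfolding Cc_def by simp

lemma best_char_min: assumes T: "tree_on n T" and f: "best T f" and g: "fit T g" and i: "i < m"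
  shows "Cc T f i \<le> Cc T g i"
proof -
  define h where "h t j = (if j = i then g t j else f t j)" for t j
  have hfit: "fit T h" using f g unfolding h_def best_fit_def is_fit_def by auto
  have "fit_cost m T f \<le> fit_cost m T h" using MP_le[OF hfit] f unfolding best_fit_def by simp
  then have le: "(\<Sum>j<m. Cc T f j) \<le> (\<Sum>j<m. Cc T h j)" unfolding fit_cost_eq[OF T] .
  have "(\<Sum>j<m. Cc T h j) = Cc T h i + (\<Sum>j\<in>{..<m} - {i}. Cc T h j)"
    using i by (simp add: sum.remove)
  also have "(\<Sum>j\<in>{..<m} - {i}. Cc T h j) = (\<Sum>j\<in>{..<m} - {i}. Cc T f j)"
    by (rule sum.cong[OF refl]) (rule Cc_dep, simp add: h_def)
  also have "Cc T h i = Cc T g i" by (rule Cc_dep) (simp add: h_def)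
  finally have "(\<Sum>j<m. Cc T h j) = Cc T g i + (\<Sum>j\<in>{..<m} - {i}. Cc T f j)" .
  moreover have "(\<Sum>j<m. Cc T f j) = Cc T f i + (\<Sum>j\<in>{..<m} - {i}. Cc T f j)"
    using i by (simp add: sum.remove)
  ultimately show ?thesis using le by linarith
qed

lemma best_from_char: assumes T: "tree_on n T" and F: "fit T F" and f0: "best T f0"
  and le: "\<And>i. i < m \<Longrightarrow> Cc T F i \<le> Cc T f0 i"
  shows "best T F"
proof -
  have "fit_cost m T F \<le> fit_cost m T f0"
    unfolding fit_cost_eq[OF T] using le by (intro sum_mono) simp
  moreover have "MPv T \<le> fit_cost m T F" by (rule MP_le[OF F])
  ultimately show ?thesis using F f0 unfolding best_fit_def by simp
qed

lemma best_Cc_eq: assumes "tree_on n T" "best T f" "best T g" "i < m" shows "Cc T f i = Cc T g i"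
  using best_char_min[OF assms(1,2) _ assms(4), of g] best_char_min[OF assms(1,3) _ assms(4), of f] assms
  unfolding best_fit_def by simp

end


lemma Dg_split:
  assumes fin: "finite E" and part: "\<And>e. e \<in> E \<Longrightarrow> e \<noteq> {u,v} \<Longrightarrow> e \<subseteq> A \<or> e \<inter> A = {}"
    and uvE: "{u,v} \<in> E" and uA: "u \<in> A" and vA: "v \<notin> A" and ne: "{} \<notin> E"
  shows "Dg E \<phi> = Dg {e\<in>E. e \<subseteq> A} \<phi> + Dg {e\<in>E. e \<inter> A = {}} \<phi> + (card {\<phi> u, \<phi> v} - 1)"
proof -
  define EA where "EA = {e\<in>E. e \<subseteq> A}"
  define EB where "EB = {e\<in>E. e \<inter> A = {}}"
  have E: "E = (EA \<union> EB) \<union> {{u,v}}"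
  proof (intro equalityI subsetI)
    fix e assume e: "e \<in> E"
    show "e \<in> (EA \<union> EB) \<union> {{u,v}}"
    proof (cases "e = {u,v}")
      case False
      then have "e \<subseteq> A \<or> e \<inter> A = {}" using part e by blast
      then show ?thesis using e unfolding EA_def EB_def by blast
    qed simp
  next
    fix e assume "e \<in> (EA \<union> EB) \<union> {{u,v}}"
    then show "e \<in> E" using uvE unfolding EA_def EB_def by blast
  qed
  have d1: "EA \<inter> EB = {}"
  proof -
    have "e \<notin> EB" if "e \<in> EA" for e
    proof
      assume "e \<in> EB"
      then have "e = {}" using that unfolding EA_def EB_def by blast
      then show False using that ne unfolding EA_def by blast
    qed
    then show ?thesis by blast
  qed
  have d2: "(EA \<union> EB) \<inter> {{u,v}} = {}"
  proof -
    have "{u,v} \<notin> EA" using vA unfolding EA_def by blast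
    moreover have "{u,v} \<notin> EB" using uA unfolding EB_def by blast
    ultimately show ?thesis by blast
  qed
  have fA: "finite EA" and fB: "finite EB" using fin unfolding EA_def EB_def by simp_all
  have "Dg E \<phi> = Dg (EA \<union> EB) \<phi> + Dg {{u,v}} \<phi>"
  proof -
    have "finite (EA \<union> EB)" using fA fB by simp
    then show ?thesis unfolding Dg_def by (subst E) (rule sum.union_disjoint, assumption, simp, rule d2)
  qed
  also have "Dg (EA \<union> EB) \<phi> = Dg EA \<phi> + Dg EB \<phi>"
    unfolding Dg_def by (rule sum.union_disjoint[OF fA fB d1])
  finally show ?thesis unfolding EA_def EB_def by (simp add: Dg_def)
qed

lemma Dg_cong: "(\<And>e t. e \<in> E \<Longrightarrow> t \<in> e \<Longrightarrow> \<phi> t = \<psi> t) \<Longrightarrow> Dg E \<phi> = Dg E \<psi>"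
  unfolding Dg_def by (intro sum.cong refl arg_cong[where f="\<lambda>x. card x - 1"] image_cong) auto

context mpc begin

lemma side_props:
  assumes T: "tree_on n T" "{u,v} \<in> edges T" "u \<noteq> v"
  shows "u \<in> {t. (adjm T {u,v})\<^sup>*\<^sup>* u t}" "v \<notin> {t. (adjm T {u,v})\<^sup>*\<^sup>* u t}"
    "\<And>e. e \<in> edges T \<Longrightarrow> e \<noteq> {u,v} \<Longrightarrow> e \<subseteq> {t. (adjm T {u,v})\<^sup>*\<^sup>* u t} \<or> e \<inter> {t. (adjm T {u,v})\<^sup>*\<^sup>* u t} = {}"
proof -
  show "u \<in> {t. (adjm T {u,v})\<^sup>*\<^sup>* u t}" by simp
  show "v \<notin> {t. (adjm T {u,v})\<^sup>*\<^sup>* u t}" using bridgesD[OF tree_on_bridges[OF T(1)] T(2,3)] by simp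
  fix e assume e: "e \<in> edges T" "e \<noteq> {u,v}"
  obtain a b where ab: "e = {a,b}" using e(1) tree_on_wfg[OF T(1)] unfolding wfg_def by blast
  have "adjm T {u,v} a b" using e ab unfolding adjm_def by simp
  then have "(adjm T {u,v})\<^sup>*\<^sup>* u a \<longleftrightarrow> (adjm T {u,v})\<^sup>*\<^sup>* u b" by (rule reach_step_iff)
  then show "e \<subseteq> {t. (adjm T {u,v})\<^sup>*\<^sup>* u t} \<or> e \<inter> {t. (adjm T {u,v})\<^sup>*\<^sup>* u t} = {}"
    using ab by auto
qed

lemma noempty_edge: "tree_on n T \<Longrightarrow> {} \<notin> edges T"
  using tree_on_wfg unfolding wfg_def by blast

lemma mix_le:
  assumes T: "tree_on n T" "{u,v} \<in> edges T" "u \<noteq> v"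
    and f: "best T f" and g: "best T g" and i: "i < m" and eq: "f u i = g v i"
  shows "Cc T (\<lambda>t j. if t \<in> {t. (adjm T {u,v})\<^sup>*\<^sup>* u t} then f t j else g t j) i \<le> Cc T f i"
proof -
  define A where "A = {t. (adjm T {u,v})\<^sup>*\<^sup>* u t}"
  have uA: "u \<in> A" and vA: "v \<notin> A" and part: "\<And>e. e \<in> edges T \<Longrightarrow> e \<noteq> {u,v} \<Longrightarrow> e \<subseteq> A \<or> e \<inter> A = {}"
    using side_props[OF T] unfolding A_def by blast+
  have fin: "finite (edges T)" using finite_edges tree_on_wfg[OF T(1)] tree_on_fin[OF T(1)] by blast
  note spl = Dg_split[OF fin part T(2) uA vA noempty_edge[OF T(1)]]
  let ?EA = "{e\<in>edges T. e \<subseteq> A}" and ?EB = "{e\<in>edges T. e \<inter> A = {}}"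
  define pf where "pf t = f t i" for t
  define pg where "pg t = g t i" for t
  define pF where "pF t = (if t \<in> A then f t i else g t i)" for t
  define pG where "pG t = (if t \<in> A then g t i else f t i)" for t
  have CF: "Cc T (\<lambda>t j. if t \<in> A then f t j else g t j) i = Dg ?EA pf + Dg ?EB pg + (card {pF u, pF v} - 1)"
  proof -
    have "Cc T (\<lambda>t j. if t \<in> A then f t j else g t j) i = Dg (edges T) pF"
      unfolding Cc_def pF_def by (rule arg_cong[where f="Dg (edges T)"]) auto
    also have "\<dots> = Dg ?EA pF + Dg ?EB pF + (card {pF u, pF v} - 1)" by (rule spl)
    also have "Dg ?EA pF = Dg ?EA pf" by (rule Dg_cong) (auto simp: pF_def pf_def)
    also have "Dg ?EB pF = Dg ?EB pg" by (rule Dg_cong) (auto simp: pF_def pg_def)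
    finally show ?thesis .
  qed
  have pF0: "card {pF u, pF v} - 1 = 0" using uA vA eq by (simp add: pF_def)
  have Cf: "Cc T f i = Dg ?EA pf + Dg ?EB pf + (card {pf u, pf v} - 1)"
    unfolding Cc_def pf_def[symmetric] by (rule spl)
  have Cg: "Cc T g i = Dg ?EA pg + Dg ?EB pg + (card {pg u, pg v} - 1)"
    unfolding Cc_def pg_def[symmetric] by (rule spl)
  define G where "G t j = (if j = i then pG t else f t j)" for t j
  have Gfit: "fit T G" using f g unfolding best_fit_def is_fit_def G_def pG_def by auto
  have CG: "Cc T G i = Dg ?EA pg + Dg ?EB pf + (card {pG u, pG v} - 1)"
  proof -
    have "Cc T G i = Dg (edges T) pG" unfolding Cc_def G_def by simp
    also have "\<dots> = Dg ?EA pG + Dg ?EB pG + (card {pG u, pG v} - 1)" by (rule spl)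
    also have "Dg ?EA pG = Dg ?EA pg" by (rule Dg_cong) (auto simp: pG_def pg_def)
    also have "Dg ?EB pG = Dg ?EB pf" by (rule Dg_cong) (auto simp: pG_def pf_def)
    finally show ?thesis .
  qed
  have le1: "Cc T f i \<le> Cc T G i" by (rule best_char_min[OF T(1) f Gfit i])
  have eqfg: "Cc T f i = Cc T g i" by (rule best_Cc_eq[OF T(1) f g i])
  have key: "card {pG u, pG v} - 1 \<le> (card {pf u, pf v} - 1) + (card {pg u, pg v} - 1)"
    using uA vA eq unfolding pG_def pf_def pg_def card_pair_m1 by auto
  show ?thesis using CF pF0 Cf Cg CG le1 eqfg key unfolding A_def by linarith
qed

lemma md0_best:
  assumes T: "tree_on n T" "{u,v} \<in> edges T" "u \<noteq> v" and md: "md m Sig n S T u v = 0"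
  shows "\<exists>F. best T F \<and> (\<forall>i<m. F u i = F v i)"
proof -
  define A where "A = {t. (adjm T {u,v})\<^sup>*\<^sup>* u t}"
  have uA: "u \<in> A" and vA: "v \<notin> A" using side_props[OF T] unfolding A_def by blast+
  have "{i. i < m \<and> VV m Sig n S T u i \<inter> VV m Sig n S T v i = {}} = {}"
    using md unfolding md_def by (simp add: card_eq_0_iff)
  then have "\<forall>i\<in>{..<m}. \<exists>p. best T (fst p) \<and> best T (snd p) \<and> fst p u i = snd p v i"
    unfolding VV_def by fastforce
  then obtain P where P: "\<And>i. i \<in> {..<m} \<Longrightarrow> best T (fst (P i)) \<and> best T (snd (P i)) \<and> fst (P i) u i = snd (P i) v i"
    by (metis bchoice)
  define F where "F t j = (if t \<in> A then fst (P j) t j else snd (P j) t j)" for t j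
  have Ffit: "fit T F" unfolding is_fit_def
  proof (intro conjI ballI allI impI)
    fix t i assume "t \<in> nodes T" "i < m"
    then show "F t i \<in> Sig i" using P[of i] unfolding F_def best_fit_def is_fit_def by auto
  next
    fix j i assume "j < n" "i < m"
    then show "F (lab T j) i = S j i" using P[of i] unfolding F_def best_fit_def is_fit_def by auto
  qed
  have f0: "best T (fst (P 0))" using P[of 0] m1 by auto
  have "best T F"
  proof (rule best_from_char[OF T(1) Ffit f0])
    fix i assume i: "i < m"
    have Pi: "best T (fst (P i))" "best T (snd (P i))" "fst (P i) u i = snd (P i) v i" using P[of i] i by auto
    have "Cc T F i = Cc T (\<lambda>t j. if t \<in> A then fst (P i) t j else snd (P i) t j) i"
      by (rule Cc_dep) (simp add: F_def)
    also have "\<dots> \<le> Cc T (fst (P i)) i" using mix_le[OF T Pi(1) Pi(2) i Pi(3)] unfolding A_def by simp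
    also have "\<dots> = Cc T (fst (P 0)) i" by (rule best_Cc_eq[OF T(1) Pi(1) f0 i])
    finally show "Cc T F i \<le> Cc T (fst (P 0)) i" .
  qed
  moreover have "\<forall>i<m. F u i = F v i" using P uA vA unfolding F_def by auto
  ultimately show ?thesis by blast
qed

end


context mpc begin

lemma contract_fit:
  assumes C: "contr n T u v w" and f: "fit T f" and fuv: "\<forall>i<m. f u i = f v i"
  shows "fit (contract T u v w) (f(w := f u))"
    "fit_cost m (contract T u v w) (f(w := f u)) \<le> fit_cost m T f"
proof -
  interpret contr n T u v w by (rule C)
  let ?f = "f(w := f u)"
  have rng: "lab T ` {..<n} \<subseteq> nodes T" by (rule tree_on_rng[OF tree])
  show fit': "fit T' ?f" unfolding is_fit_def
  proof (intro conjI ballI allI impI)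
    fix t i assume t: "t \<in> nodes T'" and i: "i < m"
    show "?f t i \<in> Sig i"
    proof (cases "t = w")
      case True then show ?thesis using f uV i unfolding is_fit_def by simp
    next
      case False
      then have "t \<in> nodes T" using t unfolding contract_parts by blast
      then show ?thesis using f False i unfolding is_fit_def by simp
    qed
  next
    fix j i assume j: "j < n" and i: "i < m"
    have fj: "f (lab T j) i = S j i" using f j i unfolding is_fit_def by blast
    show "?f (lab T' j) i = S j i"
    proof (cases "lab T j \<in> {u,v}")
      case True
      then have "lab T' j = w" unfolding contract_parts by simp
      moreover have "f u i = S j i" using True fj fuv i by auto
      ultimately show ?thesis by simp
    next
      case False
      then have l: "lab T' j = lab T j" unfolding contract_parts by simp
      have "lab T j \<in> nodes T" using rng j by blast
      then have "lab T j \<noteq> w" using False wfresh by blast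
      then show ?thesis using l fj by simp
    qed
  qed
  define phi where "phi e = (if e \<inter> {u,v} = {} then e else (e - {u,v}) \<union> {w})" for e
  have finE: "finite (edges T)" by (rule finite_edges[OF wf tree_on_fin[OF tree]])
  have finE': "finite (edges T')" by (rule finite_edges[OF wf' tree_on_fin[OF tree']])
  show "fit_cost m T' ?f \<le> fit_cost m T f" unfolding fit_cost_def
  proof (rule sum_map_le[OF finE finE', where Z = "{}" and \<phi> = phi])
    show "edges T' \<subseteq> {} \<union> phi ` edges T"
    proof
      fix e assume "e \<in> edges T'"
      then consider "e \<in> edges T" "e \<inter> {u,v} = {}"
        | x where "e = {w,x}" "x \<notin> {u,v}" "{u,x} \<in> edges T \<or> {v,x} \<in> edges T"
        unfolding contract_parts by blast
      then show "e \<in> {} \<union> phi ` edges T"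
      proof cases
        case 1 then have "phi e = e" unfolding phi_def by simp
        then show ?thesis using 1 by (metis UnI2 image_eqI)
      next
        case (2 x)
        then obtain c where c: "c \<in> {u,v}" "{c,x} \<in> edges T" by blast
        have "{c,x} \<inter> {u,v} \<noteq> {}" using c by blast
        then have "phi {c,x} = ({c,x} - {u,v}) \<union> {w}" unfolding phi_def by (rule if_not_P)
        also have "\<dots> = e" using c 2 by auto
        finally show ?thesis using c by (metis UnI2 image_eqI)
      qed
    qed
  next
    fix e :: "nat set" assume "e \<in> {}" then show "edge_cost m ?f e = 0" by simp
  next
    fix e assume e: "e \<in> edges T"
    obtain a b where ab: "e = {a,b}" "a \<noteq> b" "a \<in> nodes T" "b \<in> nodes T"
      using e wf unfolding wfg_def by blast
    show "edge_cost m ?f (phi e) \<le> edge_cost m f e"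
    proof (cases "e \<inter> {u,v} = {}")
      case True
      then have "phi e = e" unfolding phi_def by simp
      moreover have "edge_cost m ?f e = edge_cost m f e"
      proof (rule edge_cost_cong)
        fix t i assume "t \<in> e"
        then have "t \<noteq> w" using True ab wfresh by auto
        then show "?f t i = f t i" by simp
      qed
      ultimately show ?thesis by simp
    next
      case False
      then have ph: "phi e = (e - {u,v}) \<union> {w}" unfolding phi_def by (rule if_not_P)
      show ?thesis
      proof (cases "e = {u,v}")
        case True
        then have "phi e = {w,w}" using ph by auto
        then have "edge_cost m ?f (phi e) = 0" by (simp only: edge_cost_pair hamming_self)
        then show ?thesis by simp
      next
        case False
        obtain c x where cx: "e = {c,x}" "c \<in> {u,v}" "x \<notin> {u,v}"
        proof (cases "a \<in> {u,v}")
          case True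
          then have "b \<notin> {u,v}" using False ab une by auto
          then show ?thesis using that[of a b] True ab by simp
        next
          case False': False
          then have "b \<in> {u,v}" using \<open>\<not> e \<inter> {u,v} = {}\<close> ab by auto
          then show ?thesis using that[of b a] False' ab by (simp add: insert_commute)
        qed
        have "x \<in> nodes T" using cx ab by auto
        then have xw: "x \<noteq> w" using cx wfresh by auto
        have "phi e = {w,x}" using ph cx by auto
        then have "edge_cost m ?f (phi e) = hamming m (f u) (f x)"
          using xw by (simp add: edge_cost_pair)
        also have "\<dots> = hamming m (f c) (f x)"
          using cx(2) fuv by (intro hamming_cong) auto
        also have "\<dots> = edge_cost m f e" using cx by (simp add: edge_cost_pair)
        finally show ?thesis by simp
      qed
    qed
  qed
qed

lemma MP_contract_le:
  assumes C: "contr n T u v w" and f: "best T f" and fuv: "\<forall>i<m. f u i = f v i"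
  shows "MPv (contract T u v w) \<le> MPv T"
proof -
  have "MPv (contract T u v w) \<le> fit_cost m (contract T u v w) (f(w := f u))"
    by (rule MP_le[OF contract_fit(1)[OF C _ fuv]]) (use f in \<open>simp add: best_fit_def\<close>)
  also have "\<dots> \<le> fit_cost m T f" by (rule contract_fit(2)[OF C _ fuv]) (use f in \<open>simp add: best_fit_def\<close>)
  also have "\<dots> = MPv T" using f by (simp add: best_fit_def)
  finally show ?thesis .
qed

lemma split_fit:
  assumes P: "spl n T x z N" and f: "fit T f"
  shows "fit (split T x z N) (f(z := f x))"
    "fit_cost m (split T x z N) (f(z := f x)) \<le> fit_cost m T f"
proof -
  interpret spl n T x z N by (rule P)
  let ?g = "f(z := f x)"
  have rng: "lab T ` {..<n} \<subseteq> nodes T" by (rule tree_on_rng[OF tree])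
  show "fit T' ?g" unfolding is_fit_def
  proof (intro conjI ballI allI impI)
    fix t i assume t: "t \<in> nodes T'" and i: "i < m"
    show "?g t i \<in> Sig i"
    proof (cases "t = z")
      case True then show ?thesis using f xV i unfolding is_fit_def by simp
    next
      case False
      then have "t \<in> nodes T" using t unfolding split_parts by blast
      then show ?thesis using f False i unfolding is_fit_def by simp
    qed
  next
    fix j i assume j: "j < n" and i: "i < m"
    have "lab T j \<in> nodes T" using rng j by blast
    then have "lab T j \<noteq> z" using zV by blast
    then show "?g (lab T' j) i = S j i" using f j i unfolding is_fit_def split_parts by simp
  qed
  define phi where "phi e = (if \<exists>y\<in>N. e = {x,y} then {z} \<union> (e - {x}) else e)" for e
  have finE: "finite (edges T)" by (rule finite_edges[OF wf finV])
  have finE': "finite (edges T')" by (rule finite_edges[OF wf' tree_on_fin[OF tree']])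
  show "fit_cost m T' ?g \<le> fit_cost m T f" unfolding fit_cost_def
  proof (rule sum_map_le[OF finE finE', where Z = "{{x,z}}" and \<phi> = phi])
    show "edges T' \<subseteq> {{x,z}} \<union> phi ` edges T"
    proof
      fix e assume e: "e \<in> edges T'"
      then obtain s t where st: "e = {s,t}" using wf' unfolding wfg_def by blast
      from e[unfolded st] show "e \<in> {{x,z}} \<union> phi ` edges T"
      proof (cases rule: edgeE)
        case A
        then have "\<not> (\<exists>y\<in>N. {s,t} = {x,y})" by blast
        then have "phi {s,t} = {s,t}" unfolding phi_def by simp
        then show ?thesis using A st by (metis UnI2 image_eqI)
      next
        case (B y)
        have "\<not> (\<exists>y'\<in>N. {x,y} = {x,y'})"
        proof
          assume "\<exists>y'\<in>N. {x,y} = {x,y'}"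
          then obtain y' where "y' \<in> N" "{x,y} = {x,y'}" by blast
          then have "y = y'" by (auto simp: doubleton_eq_iff)
          then show False using B(3) \<open>y' \<in> N\<close> by blast
        qed
        then have "phi {x,y} = {x,y}" unfolding phi_def by simp
        then show ?thesis using B st by (metis UnI2 image_eqI)
      next
        case (C y)
        then have "phi {x,y} = {z} \<union> ({x,y} - {x})" unfolding phi_def by auto
        also have "\<dots> = {z,y}" using C(5) by auto
        finally show ?thesis using C st by (metis UnI2 image_eqI)
      next
        case D then show ?thesis using st by simp
      qed
    qed
  next
    fix e assume "e \<in> {{x,z}}"
    then show "edge_cost m ?g e = 0" using xz by (simp add: edge_cost_pair hamming_self)
  next
    fix e assume e: "e \<in> edges T"
    obtain a b where ab: "e = {a,b}" "a \<noteq> b" "a \<in> nodes T" "b \<in> nodes T"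
      using e wf unfolding wfg_def by blast
    show "edge_cost m ?g (phi e) \<le> edge_cost m f e"
    proof (cases "\<exists>y\<in>N. e = {x,y}")
      case True
      then obtain y where y: "y \<in> N" "e = {x,y}" by blast
      have "phi e = {z} \<union> (e - {x})" using True unfolding phi_def by simp
      also have "\<dots> = {z,y}" using y Nprop(3)[OF y(1)] by auto
      finally have "edge_cost m ?g (phi e) = hamming m (f x) (f y)"
        using Nprop(4)[OF y(1)] by (simp add: edge_cost_pair)
      also have "\<dots> = edge_cost m f e" using y by (simp add: edge_cost_pair)
      finally show ?thesis by simp
    next
      case False
      then have "phi e = e" unfolding phi_def by simp
      moreover have "edge_cost m ?g e = edge_cost m f e"
      proof (rule edge_cost_cong)
        fix t i assume "t \<in> e"
        then have "t \<noteq> z" using ab zV by auto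
        then show "?g t i = f t i" by simp
      qed
      ultimately show ?thesis by simp
    qed
  qed
qed

lemma deg2_cost:
  assumes T: "tree_on n T" and uE: "{u,a} \<in> edges T" and ul: "u \<notin> labelled n T"
    and nbu: "nb T u \<subseteq> {a,y}" and f: "fit T f"
  shows "\<exists>g. fit T g \<and> fit_cost m T g \<le> fit_cost m T f \<and> (\<forall>i<m. g u i = g a i)"
proof -
  have wf: "wfg T" by (rule tree_on_wfg[OF T])
  have ua: "u \<noteq> a" "u \<in> nodes T" "a \<in> nodes T" using wfg_edge[OF wf uE] by auto
  define g where "g = f(u := f a)"
  have gfit: "fit T g" unfolding is_fit_def
  proof (intro conjI ballI allI impI)
    fix t i assume "t \<in> nodes T" "i < m"
    then show "g t i \<in> Sig i" using f ua unfolding is_fit_def g_def by simp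
  next
    fix j i assume j: "j < n" and i: "i < m"
    have "lab T j \<noteq> u" using ul j unfolding labelled_def by blast
    then show "g (lab T j) i = S j i" using f j i unfolding is_fit_def g_def by simp
  qed
  have finE: "finite (edges T)" by (rule finite_edges[OF wf tree_on_fin[OF T]])
  define Eu where "Eu = {e\<in>edges T. u \<in> e}"
  define Er where "Er = {e\<in>edges T. u \<notin> e}"
  have Edisj: "edges T = Eu \<union> Er" "Eu \<inter> Er = {}" unfolding Eu_def Er_def by blast+
  have fEu: "finite Eu" and fEr: "finite Er" using finE unfolding Eu_def Er_def by simp_all
  have sumE: "fit_cost m T h = sum (edge_cost m h) Eu + sum (edge_cost m h) Er" for h
    unfolding fit_cost_def by (subst Edisj(1)) (rule sum.union_disjoint[OF fEu fEr Edisj(2)])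
  have Er_eq: "sum (edge_cost m g) Er = sum (edge_cost m f) Er"
  proof (rule sum.cong[OF refl])
    fix e assume "e \<in> Er"
    then have "u \<notin> e" unfolding Er_def by blast
    then show "edge_cost m g e = edge_cost m f e" by (intro edge_cost_cong) (auto simp: g_def)
  qed
  have Eu_sub: "Eu \<subseteq> {{u,a},{u,y}}"
  proof
    fix e assume "e \<in> Eu"
    then have e: "e \<in> edges T" "u \<in> e" unfolding Eu_def by blast+
    obtain p q where pq: "e = {p,q}" using e wf unfolding wfg_def by blast
    define t where "t = (if p = u then q else p)"
    have "e = {u,t}" using pq e(2) unfolding t_def by auto
    then have "t \<in> nb T u" using e(1) unfolding nb_def by simp
    then have "t = a \<or> t = y" using nbu by blast
    then show "e \<in> {{u,a},{u,y}}" using \<open>e = {u,t}\<close> by blast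
  qed
  have uaEu: "{u,a} \<in> Eu" using uE unfolding Eu_def by simp
  have Eu_le: "sum (edge_cost m g) Eu \<le> sum (edge_cost m f) Eu"
  proof (cases "{u,y} \<in> Eu \<and> y \<noteq> a")
    case True
    then have Eu2: "Eu = {{u,a},{u,y}}" using Eu_sub uaEu by blast
    have yu: "y \<noteq> u" using True wfg_edge[OF wf] unfolding Eu_def by blast
    have dif: "{u,a} \<noteq> {u,y}" using True by (auto simp: doubleton_eq_iff)
    have "sum (edge_cost m g) Eu = edge_cost m g {u,a} + edge_cost m g {u,y}"
      unfolding Eu2 using dif by simp
    also have "\<dots> = hamming m (f a) (f y)"
      using yu ua by (simp add: edge_cost_pair g_def hamming_self)
    also have "\<dots> \<le> hamming m (f a) (f u) + hamming m (f u) (f y)" by (rule hamming_tri)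
    also have "\<dots> = edge_cost m f {u,a} + edge_cost m f {u,y}"
      by (simp add: edge_cost_pair hamming_sym)
    also have "\<dots> = sum (edge_cost m f) Eu" unfolding Eu2 using dif by simp
    finally show ?thesis .
  next
    case False
    then have "Eu = {{u,a}}" using Eu_sub uaEu by blast
    then have "sum (edge_cost m g) Eu = 0" using ua by (simp add: edge_cost_pair g_def hamming_self)
    then show ?thesis by simp
  qed
  have "fit_cost m T g \<le> fit_cost m T f" using sumE[of g] sumE[of f] Er_eq Eu_le by simp
  moreover have "\<forall>i<m. g u i = g a i" using ua by (simp add: g_def)
  ultimately show ?thesis using gfit by blast
qed

end


definition mu :: "nat \<Rightarrow> ptree \<Rightarrow> nat" where
  "mu n T = (\<Sum>v\<in>nodes T. if v \<in> labelled n T then degree T v - 1 else degree T v - 3)"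

lemma nonisolated:
  assumes T: "tree_on n T" and n: "n \<ge> 2" and v: "v \<in> nodes T"
  shows "\<exists>a. {v,a} \<in> edges T"
proof -
  have inj: "inj_on (lab T) {..<n}" and rng: "lab T ` {..<n} \<subseteq> nodes T"
    using tree_on_inj[OF T] tree_on_rng[OF T] by auto
  have "lab T 0 \<noteq> lab T 1" using inj n by (auto dest: inj_onD)
  then obtain o' where o': "o' \<in> nodes T" "o' \<noteq> v" using rng n
    by (metis (no_types, lifting) image_subset_iff lessThan_iff less_le_trans one_less_numeral_iff
        semiring_norm(76) zero_less_numeral)
  have "(adjacent T)\<^sup>*\<^sup>* v o'" using tree_on_conn[OF T] v o'(1) unfolding connected_graph_def by blast
  then show ?thesis
  proof (cases rule: converse_rtranclpE)
    case base then show ?thesis using o'(2) by simp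
  next
    case (step a) then show ?thesis unfolding adjacent_def by blast
  qed
qed

lemma deg_pos:
  assumes T: "tree_on n T" and n: "n \<ge> 2" and v: "v \<in> nodes T"
  shows "degree T v \<ge> 1"
proof -
  obtain a where "{v,a} \<in> edges T" using nonisolated[OF assms] by blast
  then have "a \<in> nb T v" by (simp add: nb_def)
  moreover have "finite (nb T v)"
    using nb_sub[OF tree_on_wfg[OF T]] tree_on_fin[OF T] finite_subset by blast
  ultimately have "card (nb T v) \<ge> 1" by (metis One_nat_def Suc_leI card_gt_0_iff empty_iff)
  then show ?thesis using degree_nb[OF tree_on_wfg[OF T]] by simp
qed

lemma same_tree:
  assumes "nodes A = nodes B" "edges A = edges B" "\<And>j. j < n \<Longrightarrow> lab A j = lab B j"
  shows "tree_on n A = tree_on n B" "labelled n A = labelled n B" "degree A = degree B"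
    "is_fit m Sig n S A = is_fit m Sig n S B" "fit_cost m A = fit_cost m B"
    "MP m Sig n S A = MP m Sig n S B"
proof -
  have im: "lab A ` {..<n} = lab B ` {..<n}" using assms(3) by (intro image_cong) auto
  have ij: "inj_on (lab A) {..<n} = inj_on (lab B) {..<n}" using assms(3) by (intro inj_on_cong) auto
  have adj: "adjacent A = adjacent B" unfolding adjacent_def using assms(2) by simp
  have cyc: "is_cycle A = is_cycle B" unfolding is_cycle_def using adj assms(1) by simp
  show "tree_on n A = tree_on n B" unfolding tree_on_def connected_graph_def acyclic_graph_def
    using assms(1,2) adj cyc im ij by simp
  show "labelled n A = labelled n B" unfolding labelled_def using im by simp
  show "degree A = degree B" unfolding degree_def using assms(2) by simp
  show fA: "is_fit m Sig n S A = is_fit m Sig n S B" unfolding is_fit_def using assms by (intro ext) simp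
  show fc: "fit_cost m A = fit_cost m B" unfolding fit_cost_def using assms(2) by simp
  show "MP m Sig n S A = MP m Sig n S B" unfolding MP_def fA fc by (rule refl)
qed

context mpc begin

abbreviation "step \<equiv> md0_contraction_step m Sig n S"

lemma step_tree:
  assumes T: "tree_on n T" and st: "step T T'"
  shows "tree_on n T' \<and> MPv T' \<le> MPv T"
proof -
  obtain u v w where uvw: "u \<noteq> v" "{u,v} \<in> edges T" "\<not> (u \<in> labelled n T \<and> v \<in> labelled n T)"
    "md m Sig n S T u v = 0" "w \<notin> nodes T - {u,v}" "T' = contract T u v w"
    using st unfolding md0_contraction_step_def by blast
  have C: "contr n T u v w" by (unfold_locales) (use T uvw in auto)
  have "tree_on n T'" using contr.tree'[OF C] uvw(6) by simp
  moreover obtain F where F: "best T F" "\<forall>i<m. F u i = F v i" using md0_best[OF T uvw(2) uvw(1) uvw(4)] by blast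
  have "MPv T' \<le> MPv T" using MP_contract_le[OF C F] uvw(6) by simp
  ultimately show ?thesis by blast
qed

lemma chain_tree:
  assumes "step\<^sup>*\<^sup>* T0 Tk" "tree_on n T0"
  shows "tree_on n Tk \<and> MPv Tk \<le> MPv T0"
  using assms
proof (induction rule: rtranclp_induct)
  case base then show ?case by simp
next
  case (step y z)
  then have "tree_on n y" "MPv y \<le> MPv T0" by auto
  then show ?case using step_tree[OF _ step.hyps(2)] by fastforce
qed

lemma exists_mc: "\<exists>T. most_compact_MP_tree m Sig n S T"
proof -
  have t0: "tree_on n (star n)" using star_tree n2 by simp
  define c0 where "c0 = (LEAST c. \<exists>T. tree_on n T \<and> c = MPv T)"
  have "\<exists>T. tree_on n T \<and> c0 = MPv T" unfolding c0_def by (rule LeastI_ex) (use t0 in blast)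
  then obtain T1 where T1: "tree_on n T1" "c0 = MPv T1" by blast
  have c0le: "c0 \<le> MPv T'" if "tree_on n T'" for T' unfolding c0_def by (rule Least_le) (use that in blast)
  have mp1: "MP_tree m Sig n S T1" unfolding MP_tree_def using T1 c0le by simp
  define k0 where "k0 = (LEAST k. \<exists>T. MP_tree m Sig n S T \<and> k = card (nodes T))"
  have "\<exists>T. MP_tree m Sig n S T \<and> k0 = card (nodes T)" unfolding k0_def by (rule LeastI_ex) (use mp1 in blast)
  then obtain T2 where T2: "MP_tree m Sig n S T2" "k0 = card (nodes T2)" by blast
  have "k0 \<le> card (nodes T')" if "MP_tree m Sig n S T'" for T' unfolding k0_def by (rule Least_le) (use that in blast)
  then have "most_compact_MP_tree m Sig n S T2" unfolding most_compact_MP_tree_def using T2 by simp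
  then show ?thesis by blast
qed

lemma mc_deg3:
  assumes mc: "most_compact_MP_tree m Sig n S T" and v: "v \<in> nodes T" and vl: "v \<notin> labelled n T"
  shows "degree T v \<ge> 3"
proof (rule ccontr)
  assume "\<not> degree T v \<ge> 3"
  then have d: "degree T v \<le> 2" by simp
  have mpt: "MP_tree m Sig n S T" using mc unfolding most_compact_MP_tree_def by blast
  then have T: "tree_on n T" unfolding MP_tree_def by blast
  have wf: "wfg T" by (rule tree_on_wfg[OF T])
  obtain a where a: "{v,a} \<in> edges T" using nonisolated[OF T n2 v] by blast
  have va: "v \<noteq> a" "a \<in> nodes T" using wfg_edge[OF wf a] by auto
  have fin: "finite (nb T v)" using nb_sub[OF wf] tree_on_fin[OF T] finite_subset by blast
  have aN: "a \<in> nb T v" using a by (simp add: nb_def)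
  have cN: "card (nb T v) \<le> 2" using d degree_nb[OF wf] by simp
  have "card (nb T v - {a}) \<le> 1" using cN aN fin by (simp add: card_Diff_singleton)
  then have one: "\<forall>p\<in>nb T v - {a}. \<forall>q\<in>nb T v - {a}. p = q" using fin
    by (simp add: card_le_Suc0_iff_eq)
  define y where "y = (if nb T v - {a} = {} then a else (SOME y. y \<in> nb T v - {a}))"
  have nbsub: "nb T v \<subseteq> {a,y}"
  proof
    fix t assume t: "t \<in> nb T v"
    show "t \<in> {a,y}"
    proof (cases "t = a")
      case False
      then have ne: "nb T v - {a} \<noteq> {}" using t by blast
      then obtain t0 where "t0 \<in> nb T v - {a}" by blast
      then have s: "(SOME y. y \<in> nb T v - {a}) \<in> nb T v - {a}" by (rule someI)
      have "y = (SOME y. y \<in> nb T v - {a})" unfolding y_def by (rule if_not_P[OF ne])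
      then have "y \<in> nb T v - {a}" using s by simp
      then have "t = y" using one t False by blast
      then show ?thesis by simp
    qed simp
  qed
  have C: "contr n T v a a" by (unfold_locales) (use T a va vl in auto)
  obtain f where f: "best T f" using best_exists[OF T] by blast
  obtain g where g: "fit T g" "fit_cost m T g \<le> fit_cost m T f" "\<forall>i<m. g v i = g a i"
    using deg2_cost[OF T a vl nbsub] f unfolding best_fit_def by blast
  let ?T' = "contract T v a a"
  have "MPv ?T' \<le> fit_cost m ?T' (g(a := g v))" by (rule MP_le[OF contract_fit(1)[OF C g(1) g(3)]])
  also have "\<dots> \<le> fit_cost m T g" by (rule contract_fit(2)[OF C g(1) g(3)])
  also have "\<dots> \<le> MPv T" using g(2) f unfolding best_fit_def by simp
  finally have le: "MPv ?T' \<le> MPv T" .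
  have t': "tree_on n ?T'" by (rule contr.tree'[OF C])
  have "MP_tree m Sig n S ?T'" unfolding MP_tree_def using t' le mpt unfolding MP_tree_def
    using order_trans by blast
  then have "card (nodes T) \<le> card (nodes ?T')" using mc unfolding most_compact_MP_tree_def by blast
  moreover have "card (nodes ?T') = card (nodes T) - 1" by (rule contr.card'[OF C])
  moreover have "card (nodes T) \<ge> 1" using v tree_on_fin[OF T] by (metis One_nat_def Suc_leI card_gt_0_iff empty_iff)
  ultimately show False by linarith
qed

end


context mpc begin

lemma lemmaX:
  assumes "mu n T = k" "tree_on n T" "MP_tree m Sig n S T" "lab T ` UNIV \<subseteq> nodes T"
    "\<forall>v\<in>nodes T. v \<notin> labelled n T \<longrightarrow> degree T v \<ge> 3"
  shows "\<exists>T0. cubic_tree_on n T0 \<and> MPv T0 = MPv T \<and> step\<^sup>*\<^sup>* T0 T"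
  using assms
proof (induction k arbitrary: T rule: less_induct)
  case (less k T)
  have T: "tree_on n T" and mpt: "MP_tree m Sig n S T" and rngU: "lab T ` UNIV \<subseteq> nodes T"
    and d3: "\<forall>v\<in>nodes T. v \<notin> labelled n T \<longrightarrow> degree T v \<ge> 3" using less.prems by auto
  have wf: "wfg T" by (rule tree_on_wfg[OF T])
  have finV: "finite (nodes T)" by (rule tree_on_fin[OF T])
  define tm where "tm t = (if t \<in> labelled n T then degree T t - 1 else degree T t - 3)" for t
  show ?case
  proof (cases "\<forall>t\<in>nodes T. tm t = 0")
    case True
    have "\<forall>v\<in>nodes T. (v \<in> labelled n T) = (degree T v = 1) \<and> (degree T v \<noteq> 1 \<longrightarrow> degree T v = 3)"
    proof
      fix v assume v: "v \<in> nodes T"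
      have dp: "degree T v \<ge> 1" by (rule deg_pos[OF T n2 v])
      show "(v \<in> labelled n T) = (degree T v = 1) \<and> (degree T v \<noteq> 1 \<longrightarrow> degree T v = 3)"
      proof (cases "v \<in> labelled n T")
        case True
        then have "degree T v - 1 = 0" using \<open>\<forall>t\<in>nodes T. tm t = 0\<close> v unfolding tm_def by auto
        then show ?thesis using dp True by simp
      next
        case False
        then have "degree T v - 3 = 0" using \<open>\<forall>t\<in>nodes T. tm t = 0\<close> v unfolding tm_def by auto
        moreover have "degree T v \<ge> 3" using d3 v False by blast
        ultimately show ?thesis using False by simp
      qed
    qed
    then have "cubic_tree_on n T" unfolding cubic_tree_on_def using T by blast
    then show ?thesis by blast
  next
    case False
    then obtain x where x: "x \<in> nodes T" "tm x \<noteq> 0" by blast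
    have finnb: "finite (nb T x)" using nb_sub[OF wf] finV finite_subset by blast
    have degx: "degree T x = card (nb T x)" by (rule degree_nb[OF wf])
    obtain N where N: "N \<subseteq> nb T x" "card N \<ge> 2"
      "x \<in> labelled n T \<Longrightarrow> N = nb T x" "x \<notin> labelled n T \<Longrightarrow> card N = 2 \<and> degree T x \<ge> 4"
    proof (cases "x \<in> labelled n T")
      case True
      then have "degree T x \<ge> 2" using x(2) unfolding tm_def by simp
      then show ?thesis using that[of "nb T x"] True degx by simp
    next
      case False
      then have d4: "degree T x \<ge> 4" using x(2) unfolding tm_def by simp
      then have "2 \<le> card (nb T x)" using degx by simp
      then obtain N where "N \<subseteq> nb T x" "card N = 2" by (rule obtain_subset_with_card_n)
      then show ?thesis using that[of N] False d4 by simp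
    qed
    have finN: "finite N" using N(1) finnb finite_subset by blast
    obtain z where z: "z \<notin> nodes T" using ex_new_if_finite[OF infinite_UNIV_nat finV] by blast
    have P: "spl n T x z N" by unfold_locales (use T x z N in auto)
    let ?T' = "split T x z N"
    have T': "tree_on n ?T'" by (rule spl.tree'[OF P])
    have labeq: "labelled n ?T' = labelled n T" unfolding labelled_def split_parts by simp
    have rng: "lab T ` {..<n} \<subseteq> nodes T" by (rule tree_on_rng[OF T])
    have zl: "z \<notin> labelled n T" using rng z unfolding labelled_def by blast
    have rngU': "lab ?T' ` UNIV \<subseteq> nodes ?T'" using rngU unfolding split_parts by blast
    obtain f where f: "best T f" using best_exists[OF T] by blast
    let ?g = "f(z := f x)"
    have gfit: "fit ?T' ?g" using split_fit(1)[OF P] f unfolding best_fit_def by blast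
    have ff: "fit T f" "fit_cost m T f = MPv T" using f unfolding best_fit_def by auto
    have gc: "fit_cost m ?T' ?g \<le> MPv T" using split_fit(2)[OF P ff(1)] ff(2) by simp
    have le1: "MPv T \<le> MPv ?T'" using mpt T' unfolding MP_tree_def by blast
    have MPeq: "MPv ?T' = MPv T" using MP_le[OF gfit] gc le1 by simp
    have gbest: "best ?T' ?g" unfolding best_fit_def using gfit MP_le[OF gfit] gc MPeq by simp
    have mpt': "MP_tree m Sig n S ?T'" using mpt T' MPeq unfolding MP_tree_def by simp
    have dother: "degree ?T' t = degree T t" if "t \<in> nodes T" "t \<noteq> x" for t
      by (rule spl.deg_other[OF P that])
    have dz: "degree ?T' z = card N + 1" by (rule spl.deg_z[OF P])
    have dx: "degree ?T' x = card (nb T x - N) + 1" by (rule spl.deg_x[OF P])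
    have cdiff: "card (nb T x - N) = card (nb T x) - card N" using N(1) finN by (simp add: card_Diff_subset)
    have d3': "\<forall>v\<in>nodes ?T'. v \<notin> labelled n ?T' \<longrightarrow> degree ?T' v \<ge> 3"
    proof (intro ballI impI)
      fix t assume t: "t \<in> nodes ?T'" and tl: "t \<notin> labelled n ?T'"
      show "degree ?T' t \<ge> 3"
      proof (cases "t = z")
        case True then show ?thesis using dz N(2) by simp
      next
        case False
        then have tV: "t \<in> nodes T" using t unfolding split_parts by blast
        show ?thesis
        proof (cases "t = x")
          case True
          then have "x \<notin> labelled n T" using tl labeq by simp
          then have "card N = 2" "degree T x \<ge> 4" using N(4) by auto
          then show ?thesis using True dx cdiff degx by simp
        next
          case False
          then show ?thesis using dother[OF tV False] d3 tV tl labeq by simp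
        qed
      qed
    qed
    define tm' where "tm' t = (if t \<in> labelled n ?T' then degree ?T' t - 1 else degree ?T' t - 3)" for t
    have muT: "mu n T = tm x + (\<Sum>t\<in>nodes T - {x}. tm t)"
    proof -
      have "mu n T = sum tm (nodes T)" unfolding mu_def tm_def by simp
      also have "\<dots> = tm x + sum tm (nodes T - {x})" by (rule sum.remove[OF finV x(1)])
      finally show ?thesis .
    qed
    have "mu n ?T' = sum tm' (nodes ?T')" unfolding mu_def tm'_def by simp
    also have "\<dots> = sum tm' (insert z (nodes T))" unfolding split_parts by simp
    also have "\<dots> = tm' z + sum tm' (nodes T)" by (rule sum.insert[OF finV z])
    also have "sum tm' (nodes T) = tm' x + (\<Sum>t\<in>nodes T - {x}. tm' t)"
      by (rule sum.remove[OF finV x(1)])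
    also have "(\<Sum>t\<in>nodes T - {x}. tm' t) = (\<Sum>t\<in>nodes T - {x}. tm t)"
      by (rule sum.cong[OF refl]) (simp add: tm'_def tm_def labeq dother)
    finally have muT': "mu n ?T' = tm' z + tm' x + (\<Sum>t\<in>nodes T - {x}. tm t)" by simp
    have "tm' z + tm' x < tm x"
    proof (cases "x \<in> labelled n T")
      case True
      then have "N = nb T x" using N(3) by simp
      then have "tm' z = card (nb T x) + 1 - 3" "tm' x = 0" "tm x = card (nb T x) - 1"
        using dz dx True zl labeq degx unfolding tm'_def tm_def by auto
      then show ?thesis using N(2) \<open>N = nb T x\<close> by simp
    next
      case False
      then have "card N = 2" "degree T x \<ge> 4" using N(4) by auto
      then have "tm' z = 0" "tm' x = card (nb T x) - 2 + 1 - 3" "tm x = card (nb T x) - 3"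
        using dz dx False zl labeq degx cdiff unfolding tm'_def tm_def by auto
      then show ?thesis using \<open>degree T x \<ge> 4\<close> degx by simp
    qed
    then have "mu n ?T' < k" using muT muT' less.prems(1) by simp
    then obtain T0 where T0: "cubic_tree_on n T0" "MPv T0 = MPv ?T'" "step\<^sup>*\<^sup>* T0 ?T'"
      using less.IH[OF _ refl T' mpt' rngU' d3'] by blast
    have st: "step ?T' T" unfolding md0_contraction_step_def
    proof (intro exI conjI)
      show "x \<noteq> z" using x z by blast
      show "{x,z} \<in> edges ?T'" unfolding split_parts by blast
      show "\<not> (x \<in> labelled n ?T' \<and> z \<in> labelled n ?T')" using zl labeq by simp
      show "x \<notin> nodes ?T' - {x,z}" by simp
      show "T = contract ?T' x z x" using spl.contract_split[OF P rngU] by simp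
      have "{i. i < m \<and> VV m Sig n S ?T' x i \<inter> VV m Sig n S ?T' z i = {}} = {}"
      proof -
        have "?g x i \<in> VV m Sig n S ?T' x i \<inter> VV m Sig n S ?T' z i" for i
        proof -
          have "?g x i \<in> VV m Sig n S ?T' x i" unfolding VV_def using gbest by blast
          moreover have "?g z i \<in> VV m Sig n S ?T' z i" unfolding VV_def using gbest by blast
          moreover have "?g z i = ?g x i" using x z by auto
          ultimately show ?thesis by simp
        qed
        then show ?thesis by blast
      qed
      then show "md m Sig n S ?T' x z = 0" unfolding md_def by simp
    qed
    have ch: "step\<^sup>*\<^sup>* T0 T" using T0(3) st by (rule rtranclp.rtrancl_into_rtrancl)
    have "MPv T0 = MPv T" using T0(2) MPeq by simp
    then show ?thesis using ch T0(1) by blast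
  qed
qed

lemma part1:
  assumes mc: "most_compact_MP_tree m Sig n S T"
  shows "\<exists>T0 Tk. cubic_tree_on n T0 \<and> (\<forall>T'. cubic_tree_on n T' \<longrightarrow> MPv T0 \<le> MPv T') \<and>
           step\<^sup>*\<^sup>* T0 Tk \<and> tree_iso n Tk T \<and> MPv T0 = MPv T"
proof -
  have mpt: "MP_tree m Sig n S T" using mc unfolding most_compact_MP_tree_def by blast
  then have T: "tree_on n T" unfolding MP_tree_def by blast
  define Tn where "Tn = (nodes T, edges T, \<lambda>j. if j < n then lab T j else lab T 0)"
  have p: "nodes Tn = nodes T" "edges Tn = edges T" "lab Tn = (\<lambda>j. if j < n then lab T j else lab T 0)"
    unfolding Tn_def by (simp_all add: nodes_def edges_def lab_def)
  have lj: "\<And>j. j < n \<Longrightarrow> lab Tn j = lab T j" using p(3) by simp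
  note st = same_tree[OF p(1) p(2) lj]
  have Tn: "tree_on n Tn" using st(1) T by simp
  have MPe: "MPv Tn = MPv T" by (rule st(6))
  have mptn: "MP_tree m Sig n S Tn" using mpt Tn MPe unfolding MP_tree_def by simp
  have rng: "lab T ` {..<n} \<subseteq> nodes T" by (rule tree_on_rng[OF T])
  have rngU: "lab Tn ` UNIV \<subseteq> nodes Tn"
  proof
    fix t assume "t \<in> lab Tn ` UNIV"
    then obtain j where "t = lab Tn j" by blast
    then show "t \<in> nodes Tn" using rng n2 unfolding p by (cases "j < n") auto
  qed
  have d3: "\<forall>v\<in>nodes Tn. v \<notin> labelled n Tn \<longrightarrow> degree Tn v \<ge> 3"
    using mc_deg3[OF mc] st(2,3) p(1) by simp
  obtain T0 where T0: "cubic_tree_on n T0" "MPv T0 = MPv Tn" "step\<^sup>*\<^sup>* T0 Tn"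
    using lemmaX[OF refl Tn mptn rngU d3] by blast
  have iso: "tree_iso n Tn T" unfolding tree_iso_def
    by (rule exI[of _ id]) (simp add: p lj)
  have all: "\<forall>T'. cubic_tree_on n T' \<longrightarrow> MPv T0 \<le> MPv T'"
    using mpt T0(2) MPe unfolding MP_tree_def cubic_tree_on_def by simp
  have e: "MPv T0 = MPv T" using T0(2) MPe by simp
  show ?thesis
    by (rule exI[of _ T0], rule exI[of _ Tn]) (use T0(1) all T0(3) iso e in blast)
qed

lemma main:
  "(\<forall>T. most_compact_MP_tree m Sig n S T \<longrightarrow>
            (\<exists>T0 Tk. cubic_tree_on n T0 \<and>
                (\<forall>T'. cubic_tree_on n T' \<longrightarrow> MP m Sig n S T0 \<le> MP m Sig n S T') \<and>
                (md0_contraction_step m Sig n S)\<^sup>*\<^sup>* T0 Tk \<and> tree_iso n Tk T))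
       \<and> (\<forall>T0 Tk. cubic_tree_on n T0 \<and>
                (\<forall>T'. cubic_tree_on n T' \<longrightarrow> MP m Sig n S T0 \<le> MP m Sig n S T') \<and>
                (md0_contraction_step m Sig n S)\<^sup>*\<^sup>* T0 Tk \<longrightarrow> MP_tree m Sig n S Tk)"
proof (intro conjI allI impI)
  fix T assume "most_compact_MP_tree m Sig n S T"
  then show "\<exists>T0 Tk. cubic_tree_on n T0 \<and>
                (\<forall>T'. cubic_tree_on n T' \<longrightarrow> MP m Sig n S T0 \<le> MP m Sig n S T') \<and>
                (md0_contraction_step m Sig n S)\<^sup>*\<^sup>* T0 Tk \<and> tree_iso n Tk T"
    using part1 by blast
next
  fix T0 Tk assume a: "cubic_tree_on n T0 \<and>
                (\<forall>T'. cubic_tree_on n T' \<longrightarrow> MP m Sig n S T0 \<le> MP m Sig n S T') \<and>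
                (md0_contraction_step m Sig n S)\<^sup>*\<^sup>* T0 Tk"
  then have T0: "tree_on n T0" unfolding cubic_tree_on_def by blast
  have ch: "tree_on n Tk \<and> MPv Tk \<le> MPv T0" using chain_tree a T0 by blast
  obtain Tm where Tm: "most_compact_MP_tree m Sig n S Tm" using exists_mc by blast
  obtain T1 Tk1 where T1: "cubic_tree_on n T1" "MPv T1 = MPv Tm" using part1[OF Tm] by blast
  have mptm: "MP_tree m Sig n S Tm" using Tm unfolding most_compact_MP_tree_def by blast
  have "MPv Tk \<le> MPv T''" if "tree_on n T''" for T''
  proof -
    have "MPv Tk \<le> MPv T0" using ch by blast
    also have "\<dots> \<le> MPv T1" using a T1(1) by blast
    also have "\<dots> = MPv Tm" by (rule T1(2))
    also have "\<dots> \<le> MPv T''" using mptm that unfolding MP_tree_def by blast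
    finally show ?thesis .
  qed
  then show "MP_tree m Sig n S Tk" unfolding MP_tree_def using ch by blast
qed

end


theorem theorem3:
  fixes n m :: nat and Sig :: "nat \<Rightarrow> 'a set" and S :: "nat \<Rightarrow> 'a tuple"
  assumes "n \<ge> 2" and "m \<ge> 1"
    and "\<forall>i<m. finite (Sig i) \<and> Sig i \<noteq> {}"
    and "\<forall>j<n. \<forall>i<m. S j i \<in> Sig i"
    and "\<forall>j<n. \<forall>k<n. j \<noteq> k \<longrightarrow> (\<exists>i<m. S j i \<noteq> S k i)"
  shows "(\<forall>T. most_compact_MP_tree m Sig n S T \<longrightarrow>
            (\<exists>T0 Tk. cubic_tree_on n T0 \<and>
                (\<forall>T'. cubic_tree_on n T' \<longrightarrow> MP m Sig n S T0 \<le> MP m Sig n S T') \<and>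
                (md0_contraction_step m Sig n S)\<^sup>*\<^sup>* T0 Tk \<and> tree_iso n Tk T))
       \<and> (\<forall>T0 Tk. cubic_tree_on n T0 \<and>
                (\<forall>T'. cubic_tree_on n T' \<longrightarrow> MP m Sig n S T0 \<le> MP m Sig n S T') \<and>
                (md0_contraction_step m Sig n S)\<^sup>*\<^sup>* T0 Tk \<longrightarrow> MP_tree m Sig n S Tk)"
proof -
  interpret mpc m Sig n S
    by unfold_locales (use assms in auto)
  show ?thesis by (rule main)
qed

end
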